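(* Let $q$ be an odd prime power, $\omega$ a non-square in $\mathbb F_q$, $\epsilon\in\mathbb F_{q^2}$ with $\epsilon^2=\omega$, and write $z=z_1+\epsilon z_2$ ($z_i\in\mathbb F_q$) for $z\in\mathbb F_{q^2}$. Let $\mathcal C: aX^2+bXY+cXZ+dYZ+eZ^2=0$ be a non-singular conic of $\mathrm{PG}(2,q^2)$ with $d=1$, $b\notin\mathbb F_q$, and $-bcd+ad^2+b^2e$ a nonzero square in $\mathbb F_{q^2}$. Put $A=-a_2b_1+a_1b_2$, $B=b_2c_1-b_1c_2-a_2d_1+a_1d_2$, $C=-c_2d_1+c_1d_2+b_2e_1-b_1e_2$, $D=d_2e_1-d_1e_2$, and let $\mathcal S\subset\mathrm{PG}(3,q)$ be the cubic surface in coordinates $(t_1:t_2:X:Z)$ with equation $$2t_1t_2(b_1X+d_1Z)-(t_1^2+\omega t_2^2)(b_2X+d_2Z)+AX^3+BX^2Z+CXZ^2+DZ^3=0.$$ Let $\mathcal S_q$ be the number of points of $\mathrm{PG}(3,q)$ on $\mathcal S$ and $n_0$ the number of those with $t_1=t_2=0$. Then $E_q(\mathcal C)=\frac12(\mathcal S_q-n_0-q-1)$.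
   Context: $E_q(\mathcal C)$ is the number of points of $\mathrm{PG}(2,q)$ (canonically embedded in $\mathrm{PG}(2,q^2)$) external to $\mathcal C$, i.e. lying on two tangent lines of $\mathcal C$. *)

theory Defs
  imports Main
begin

text \<open>The field F_{q^2} is represented, as in the paper, by pairs (z1,z2) of elements of F_q,
  standing for z = z1 + eps z2 with eps^2 = w (w a fixed non-square of F_q).\<close>

type_synonym 'a ext = "'a \<times> 'a"

definition ezero :: "'a::field ext" where "ezero = (0, 0)"

definition eadd :: "'a::field ext \<Rightarrow> 'a ext \<Rightarrow> 'a ext" where
  "eadd x y = (fst x + fst y, snd x + snd y)"

definition eneg :: "'a::field ext \<Rightarrow> 'a ext" where
  "eneg x = (- fst x, - snd x)"

definition emul :: "'a::field \<Rightarrow> 'a ext \<Rightarrow> 'a ext \<Rightarrow> 'a ext" where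
  "emul w x y = (fst x * fst y + w * snd x * snd y, fst x * snd y + snd x * fst y)"

definition zero3 :: "'a::field ext \<times> 'a ext \<times> 'a ext" where
  "zero3 = (ezero, ezero, ezero)"

definition smul3 :: "'a::field \<Rightarrow> 'a ext \<Rightarrow> 'a ext \<times> 'a ext \<times> 'a ext \<Rightarrow> 'a ext \<times> 'a ext \<times> 'a ext" where
  "smul3 w l v = (case v of (x, y, z) \<Rightarrow> (emul w l x, emul w l y, emul w l z))"

definition proj_pt2 :: "'a::field \<Rightarrow> 'a ext \<times> 'a ext \<times> 'a ext \<Rightarrow> ('a ext \<times> 'a ext \<times> 'a ext) set" where
  "proj_pt2 w v = {smul3 w l v | l. l \<noteq> ezero}"

definition PG2 :: "'a::field \<Rightarrow> ('a ext \<times> 'a ext \<times> 'a ext) set set" where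
  "PG2 w = {proj_pt2 w v | v. v \<noteq> zero3}"

definition dot3 :: "'a::field \<Rightarrow> 'a ext \<times> 'a ext \<times> 'a ext \<Rightarrow> 'a ext \<times> 'a ext \<times> 'a ext \<Rightarrow> 'a ext" where
  "dot3 w u v = (case u of (u1, u2, u3) \<Rightarrow> case v of (v1, v2, v3) \<Rightarrow>
      eadd (eadd (emul w u1 v1) (emul w u2 v2)) (emul w u3 v3))"

definition line2 :: "'a::field \<Rightarrow> 'a ext \<times> 'a ext \<times> 'a ext \<Rightarrow> ('a ext \<times> 'a ext \<times> 'a ext) set set" where
  "line2 w u = {P \<in> PG2 w. \<forall>v\<in>P. dot3 w u v = ezero}"

definition lines2 :: "'a::field \<Rightarrow> ('a ext \<times> 'a ext \<times> 'a ext) set set set" where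
  "lines2 w = {line2 w u | u. u \<noteq> zero3}"

definition conic_form :: "'a::field \<Rightarrow> 'a ext \<Rightarrow> 'a ext \<Rightarrow> 'a ext \<Rightarrow> 'a ext \<Rightarrow> 'a ext
    \<Rightarrow> 'a ext \<times> 'a ext \<times> 'a ext \<Rightarrow> 'a ext" where
  "conic_form w a b c d e v = (case v of (X, Y, Z) \<Rightarrow>
     eadd (eadd (eadd (eadd (emul w a (emul w X X)) (emul w b (emul w X Y)))
       (emul w c (emul w X Z))) (emul w d (emul w Y Z))) (emul w e (emul w Z Z)))"

definition conic_pts :: "'a::field \<Rightarrow> 'a ext \<Rightarrow> 'a ext \<Rightarrow> 'a ext \<Rightarrow> 'a ext \<Rightarrow> 'a ext
    \<Rightarrow> ('a ext \<times> 'a ext \<times> 'a ext) set set" where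
  "conic_pts w a b c d e = {P \<in> PG2 w. \<forall>v\<in>P. conic_form w a b c d e v = ezero}"

definition conic_nonsingular :: "'a::field \<Rightarrow> 'a ext \<Rightarrow> 'a ext \<Rightarrow> 'a ext \<Rightarrow> 'a ext \<Rightarrow> 'a ext \<Rightarrow> bool" where
  "conic_nonsingular w a b c d e \<longleftrightarrow>
     \<not> (\<exists>X Y Z. (X, Y, Z) \<noteq> zero3 \<and>
          eadd (eadd (emul w (2, 0) (emul w a X)) (emul w b Y)) (emul w c Z) = ezero \<and>
          eadd (emul w b X) (emul w d Z) = ezero \<and>
          eadd (eadd (emul w c X) (emul w d Y)) (emul w (2, 0) (emul w e Z)) = ezero)"

definition tangent_lines :: "'a::field \<Rightarrow> 'a ext \<Rightarrow> 'a ext \<Rightarrow> 'a ext \<Rightarrow> 'a ext \<Rightarrow> 'a ext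
    \<Rightarrow> ('a ext \<times> 'a ext \<times> 'a ext) set set set" where
  "tangent_lines w a b c d e = {L \<in> lines2 w. card (L \<inter> conic_pts w a b c d e) = 1}"

text \<open>Points of PG(2,q) canonically embedded: those with a representative over F_q.\<close>
definition in_PG2_q :: "('a::field ext \<times> 'a ext \<times> 'a ext) set \<Rightarrow> bool" where
  "in_PG2_q P \<longleftrightarrow> (\<exists>v\<in>P. snd (fst v) = 0 \<and> snd (fst (snd v)) = 0 \<and> snd (snd (snd v)) = 0)"

definition E_q :: "'a::field \<Rightarrow> 'a ext \<Rightarrow> 'a ext \<Rightarrow> 'a ext \<Rightarrow> 'a ext \<Rightarrow> 'a ext \<Rightarrow> nat" where
  "E_q w a b c d e = card {P \<in> PG2 w. in_PG2_q P \<and>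
      card {L \<in> tangent_lines w a b c d e. P \<in> L} = 2}"

definition PG3 :: "('a::field \<times> 'a \<times> 'a \<times> 'a) set set" where
  "PG3 = {{(l * t1, l * t2, l * x, l * z) | l. l \<noteq> 0} | t1 t2 x z.
            (t1, t2, x, z) \<noteq> (0, 0, 0, 0)}"

definition surf_eq :: "'a::field \<Rightarrow> 'a ext \<Rightarrow> 'a ext \<Rightarrow> 'a ext \<Rightarrow> 'a ext \<Rightarrow> 'a ext
    \<Rightarrow> 'a \<Rightarrow> 'a \<Rightarrow> 'a \<Rightarrow> 'a \<Rightarrow> 'a" where
  "surf_eq w a b c d e t1 t2 X Z =
    (let a1 = fst a; a2 = snd a; b1 = fst b; b2 = snd b; c1 = fst c; c2 = snd c;
         d1 = fst d; d2 = snd d; e1 = fst e; e2 = snd e;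
         A = - a2 * b1 + a1 * b2;
         B = b2 * c1 - b1 * c2 - a2 * d1 + a1 * d2;
         C = - c2 * d1 + c1 * d2 + b2 * e1 - b1 * e2;
         D = d2 * e1 - d1 * e2
     in 2 * t1 * t2 * (b1 * X + d1 * Z) - (t1^2 + w * t2^2) * (b2 * X + d2 * Z)
        + A * X^3 + B * X^2 * Z + C * X * Z^2 + D * Z^3)"

definition surf_pts :: "'a::field \<Rightarrow> 'a ext \<Rightarrow> 'a ext \<Rightarrow> 'a ext \<Rightarrow> 'a ext \<Rightarrow> 'a ext
    \<Rightarrow> ('a \<times> 'a \<times> 'a \<times> 'a) set set" where
  "surf_pts w a b c d e = {P \<in> PG3. \<forall>(t1, t2, X, Z)\<in>P. surf_eq w a b c d e t1 t2 X Z = 0}"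

definition surf_pts0 :: "'a::field \<Rightarrow> 'a ext \<Rightarrow> 'a ext \<Rightarrow> 'a ext \<Rightarrow> 'a ext \<Rightarrow> 'a ext
    \<Rightarrow> ('a \<times> 'a \<times> 'a \<times> 'a) set set" where
  "surf_pts0 w a b c d e = {P \<in> surf_pts w a b c d e. \<forall>(t1, t2, X, Z)\<in>P. t1 = 0 \<and> t2 = 0}"

end

theory Submission
  imports Defs
begin
lemmas E_defs = emul_def eadd_def eneg_def ezero_def

lemma fib_card:
  assumes "finite V" "\<And>v. v \<in> V \<Longrightarrow> card {v'\<in>V. f v' = f v} = k"
  shows "card (f ` V) * k = card V"
proof -
  have "card V = card (\<Union>y\<in>f`V. {v\<in>V. f v = y})" by (rule arg_cong[where f=card]) auto
  also have "\<dots> = (\<Sum>y\<in>f`V. card {v\<in>V. f v = y})"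
    by (rule card_UN_disjoint) (use assms(1) in auto)
  also have "\<dots> = (\<Sum>y\<in>f`V. k)"
    using assms(2) by (intro sum.cong) auto
  finally show ?thesis by simp
qed

lemma card_bij_pre:
  assumes "bij f" shows "card {v. P (f v)} = card {x. P x}"
proof -
  have "{x. P x} = f ` {v. P (f v)}" using assms
    by (auto simp: bij_def surj_def)
  moreover have "inj_on f {v. P (f v)}" using assms by (auto simp: bij_def inj_on_def)
  ultimately show ?thesis by (simp add: card_image)
qed

locale qf =
  fixes w :: "'a::{finite,field}"
  assumes nsq: "\<not> (\<exists>x. x * x = w)"
begin

lemma two_nz: "(2::'a) \<noteq> 0"
proof
  assume h: "(2::'a) = 0"
  have tw: "\<And>z::'a. z + z = 0" using h by (metis mult_2 mult_zero_left)
  have "inj (\<lambda>x::'a. x*x)"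
  proof (rule injI)
    fix x y :: 'a assume xy: "x*x = y*y"
    have "(x+y)*(x+y) = x*x + y*y + 2*(x*y)" by algebra
    also have "\<dots> = y*y + y*y" using xy h by simp
    also have "\<dots> = 0" using tw by simp
    finally have "x + y = 0" by simp
    then show "x = y" using tw by (metis add_right_cancel)
  qed
  then have "surj (\<lambda>x::'a. x*x)" using finite_UNIV_inj_surj finite_UNIV by blast
  then have "\<exists>x. w = x*x" by (simp add: surj_def)
  then show False using nsq by auto
qed

lemma norm_nz:
  assumes "x \<noteq> ezero" shows "fst x * fst x - w * (snd x * snd x) \<noteq> 0"
proof
  assume h: "fst x * fst x - w * (snd x * snd x) = 0"
  show False
  proof (cases "snd x = 0")
    case True
    then have "fst x \<noteq> 0" using assms by (cases x) (auto simp: ezero_def)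
    then show False using h True by simp
  next
    case False
    have "(fst x / snd x) * (fst x / snd x) = w" using h False by (simp add: field_simps)
    then show False using nsq by blast
  qed
qed

definition einv :: "'a ext \<Rightarrow> 'a ext" where
  "einv x = (fst x / (fst x * fst x - w * (snd x * snd x)), - snd x / (fst x * fst x - w * (snd x * snd x)))"

lemma einv_left:
  assumes "x \<noteq> ezero" shows "emul w (einv x) x = (1, 0)"
proof -
  define n where "n = fst x * fst x - w * (snd x * snd x)"
  have n: "n \<noteq> 0" using norm_nz[OF assms] n_def by simp
  have 1: "fst x / n * fst x + w * (- snd x / n) * snd x = n / n"
    unfolding n_def by (simp add: field_simps)
  have 2: "fst x / n * snd x + - snd x / n * fst x = 0"
    by (simp add: field_simps)
  show ?thesis using 1 2 n unfolding einv_def emul_def n_def[symmetric] by simp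
qed

lemma emul_commute: "emul w x y = emul w y x"
  by (simp add: emul_def algebra_simps)
lemma emul_assoc: "emul w (emul w x y) z = emul w x (emul w y z)"
  unfolding emul_def by (simp add: prod_eq_iff; algebra)
lemma emul_left_commute: "emul w x (emul w y z) = emul w y (emul w x z)"
  unfolding emul_def by (simp add: prod_eq_iff; algebra)
lemmas emul_ac = emul_assoc emul_commute emul_left_commute

lemma emul_one[simp]: "emul w (1,0) x = x" "emul w x (1,0) = x"
  by (simp_all add: emul_def)
lemma emul_zero[simp]: "emul w ezero x = ezero" "emul w x ezero = ezero"
  by (simp_all add: emul_def ezero_def)

lemma einv_cancel: "l \<noteq> ezero \<Longrightarrow> emul w (einv l) (emul w l x) = x"
  by (simp add: emul_assoc[symmetric] einv_left)

lemma emul_eq_zero[simp]: "emul w x y = ezero \<longleftrightarrow> x = ezero \<or> y = ezero"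
proof
  assume h: "emul w x y = ezero"
  show "x = ezero \<or> y = ezero"
  proof (rule ccontr)
    assume "\<not> ?thesis"
    then have "x \<noteq> ezero" "y \<noteq> ezero" by auto
    then have "y = emul w (einv x) (emul w x y)" by (simp add: einv_cancel)
    then show False using h `y \<noteq> ezero` by simp
  qed
qed auto

lemma einv_nz: "l \<noteq> ezero \<Longrightarrow> einv l \<noteq> ezero"
proof
  assume "l \<noteq> ezero" "einv l = ezero"
  then have "emul w (einv l) l = ezero" by simp
  then show False using einv_left[OF `l \<noteq> ezero`] by (simp add: ezero_def)
qed

lemma emul_cancel_left: "l \<noteq> ezero \<Longrightarrow> emul w l x = emul w l y \<longleftrightarrow> x = y"
  by (metis einv_cancel)
lemma emul_cancel_right: "l \<noteq> ezero \<Longrightarrow> emul w x l = emul w y l \<longleftrightarrow> x = y"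
  by (metis einv_cancel emul_commute)

lemma two_L_nz: "((2::'a), (0::'a)) \<noteq> ezero"
  using two_nz by (simp add: ezero_def)

end

lemma smul3_simp[simp]: "smul3 w l (x,y,z) = (emul w l x, emul w l y, emul w l z)"
  by (simp add: smul3_def)
lemma dot3_simp[simp]: "dot3 w (u1,u2,u3) (v1,v2,v3) = eadd (eadd (emul w u1 v1) (emul w u2 v2)) (emul w u3 v3)"
  by (simp add: dot3_def)
lemma zero3_eq: "zero3 = (ezero,ezero,ezero)" by (simp add: zero3_def)

context qf begin


lemma smul3_one[simp]: "smul3 w (1,0) v = v" by (cases v) simp
lemma smul3_assoc: "smul3 w l (smul3 w m v) = smul3 w (emul w l m) v"
  by (cases v) (simp add: emul_assoc)
lemma smul3_zero_iff[simp]: "smul3 w l v = zero3 \<longleftrightarrow> l = ezero \<or> v = zero3"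
  by (cases v) (auto simp: zero3_def)
lemma smul3_inj: "v \<noteq> zero3 \<Longrightarrow> smul3 w l v = smul3 w m v \<Longrightarrow> l = m"
  by (cases v) (auto simp: zero3_def emul_cancel_right)

lemma one_nz[simp]: "((1::'a), (0::'a)) \<noteq> ezero" by (simp add: ezero_def)

lemma mem_proj: "v' \<in> proj_pt2 w v \<longleftrightarrow> (\<exists>l. l \<noteq> ezero \<and> v' = smul3 w l v)"
  by (auto simp: proj_pt2_def)
lemma proj_I: "l \<noteq> ezero \<Longrightarrow> smul3 w l v \<in> proj_pt2 w v"
  unfolding proj_pt2_def by blast
lemma proj_E: "v' \<in> proj_pt2 w v \<Longrightarrow> (\<And>l. l \<noteq> ezero \<Longrightarrow> v' = smul3 w l v \<Longrightarrow> thesis) \<Longrightarrow> thesis"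
  by (auto simp: proj_pt2_def)
lemma proj_self: "v \<in> proj_pt2 w v"
  unfolding mem_proj by (rule exI[of _ "(1,0)"]) simp

lemma proj_eq:
  assumes "v' \<in> proj_pt2 w v" shows "proj_pt2 w v' = proj_pt2 w v"
proof -
  obtain l where l: "l \<noteq> ezero" "v' = smul3 w l v" using assms mem_proj by auto
  show ?thesis
  proof
    show "proj_pt2 w v' \<subseteq> proj_pt2 w v"
    proof
      fix x assume "x \<in> proj_pt2 w v'"
      then obtain m where m: "m \<noteq> ezero" "x = smul3 w m v'" by (rule proj_E)
      then have "x = smul3 w (emul w m l) v" using l by (simp add: smul3_assoc)
      then show "x \<in> proj_pt2 w v" using m l proj_I[of "emul w m l" v] by simp
    qed
    show "proj_pt2 w v \<subseteq> proj_pt2 w v'"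
    proof
      fix x assume "x \<in> proj_pt2 w v"
      then obtain m where m: "m \<noteq> ezero" "x = smul3 w m v" using mem_proj by auto
      have "emul w (emul w m (einv l)) l = m" using l(1) by (simp add: emul_assoc einv_left)
      then have "x = smul3 w (emul w m (einv l)) v'" using m l by (simp add: smul3_assoc)
      moreover have "emul w m (einv l) \<noteq> ezero" using m(1) einv_nz[OF l(1)] by simp
      ultimately show "x \<in> proj_pt2 w v'" using proj_I by metis
    qed
  qed
qed

lemma proj_eq_iff: "proj_pt2 w v' = proj_pt2 w v \<longleftrightarrow> v' \<in> proj_pt2 w v"
  using proj_eq proj_self by metis

lemma proj_nz: "v \<noteq> zero3 \<Longrightarrow> v' \<in> proj_pt2 w v \<Longrightarrow> v' \<noteq> zero3"
  by (auto simp: mem_proj)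

lemma proj_card: assumes "v \<noteq> zero3" shows "card (proj_pt2 w v) = (card (UNIV :: 'a ext set) - 1)"
proof -
  have "proj_pt2 w v = (\<lambda>l. smul3 w l v) ` (UNIV - {ezero})" by (auto simp: proj_pt2_def)
  moreover have "inj_on (\<lambda>l. smul3 w l v) (UNIV - {ezero})"
    using smul3_inj[OF assms] by (auto simp: inj_on_def)
  ultimately show ?thesis by (simp add: card_image card_Diff_singleton)
qed

lemma smul_in_proj: "m \<noteq> ezero \<Longrightarrow> l \<noteq> ezero \<Longrightarrow> smul3 w m u' = smul3 w l u \<Longrightarrow> u' \<in> proj_pt2 w u"
proof -
  assume m: "m \<noteq> ezero" and l: "l \<noteq> ezero" and h: "smul3 w m u' = smul3 w l u"
  have "u' = smul3 w (einv m) (smul3 w m u')" using m by (simp add: smul3_assoc einv_left)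
  also have "\<dots> = smul3 w (emul w (einv m) l) u" using h by (simp add: smul3_assoc)
  finally show ?thesis using einv_nz[OF m] l proj_I[of "emul w (einv m) l" u] by simp
qed

lemma PG2_I: "v \<noteq> zero3 \<Longrightarrow> proj_pt2 w v \<in> PG2 w"
  unfolding PG2_def by blast

lemma cls_count:
  assumes inv: "\<And>l v. l \<noteq> ezero \<Longrightarrow> \<phi> (smul3 w l v) = \<phi> v"
  shows "card {P \<in> PG2 w. \<forall>v\<in>P. \<phi> v} * (card (UNIV :: 'a ext set) - 1) = card {v. v \<noteq> zero3 \<and> \<phi> v}"
proof -
  let ?V = "{v. v \<noteq> zero3 \<and> \<phi> v}"
  have eq: "{P \<in> PG2 w. \<forall>v\<in>P. \<phi> v} = proj_pt2 w ` ?V"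
  proof
    show "{P \<in> PG2 w. \<forall>v\<in>P. \<phi> v} \<subseteq> proj_pt2 w ` ?V"
      using proj_self by (fastforce simp: PG2_def)
    show "proj_pt2 w ` ?V \<subseteq> {P \<in> PG2 w. \<forall>v\<in>P. \<phi> v}"
    proof
      fix P assume "P \<in> proj_pt2 w ` ?V"
      then obtain v where v: "v \<noteq> zero3" "\<phi> v" "P = proj_pt2 w v" by auto
      have "\<forall>x\<in>P. \<phi> x"
      proof
        fix x assume "x \<in> P"
        then obtain l where "l \<noteq> ezero" "x = smul3 w l v" using v(3) by (blast elim: proj_E)
        then show "\<phi> x" using inv v(2) by simp
      qed
      then show "P \<in> {P \<in> PG2 w. \<forall>v\<in>P. \<phi> v}" using v PG2_I[of v] by blast
    qed
  qed
  have "card (proj_pt2 w ` ?V) * (card (UNIV :: 'a ext set) - 1) = card ?V"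
  proof (rule fib_card)
    show "finite ?V" by simp
    fix v assume v: "v \<in> ?V"
    have "{v' \<in> ?V. proj_pt2 w v' = proj_pt2 w v} = proj_pt2 w v"
    proof (intro equalityI subsetI)
      fix x assume "x \<in> {v' \<in> ?V. proj_pt2 w v' = proj_pt2 w v}"
      then show "x \<in> proj_pt2 w v" using proj_eq_iff by blast
    next
      fix x assume x: "x \<in> proj_pt2 w v"
      then obtain l where l: "l \<noteq> ezero" "x = smul3 w l v" by (blast elim: proj_E)
      have "x \<noteq> zero3" using l v by simp
      moreover have "\<phi> x" using l inv v by simp
      moreover have "proj_pt2 w x = proj_pt2 w v" using x proj_eq_iff by blast
      ultimately show "x \<in> {v' \<in> ?V. proj_pt2 w v' = proj_pt2 w v}" by blast
    qed
    then show "card {v' \<in> ?V. proj_pt2 w v' = proj_pt2 w v} = (card (UNIV :: 'a ext set) - 1)" using proj_card v by simp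
  qed
  then show ?thesis using eq by simp
qed

lemma dot3_smul_right_e: "dot3 w (u1,u2,u3) (smul3 w l (v1,v2,v3)) = emul w l (dot3 w (u1,u2,u3) (v1,v2,v3))"
  by (simp add: E_defs prod_eq_iff; algebra)
lemma dot3_smul_left_e: "dot3 w (smul3 w l (u1,u2,u3)) (v1,v2,v3) = emul w l (dot3 w (u1,u2,u3) (v1,v2,v3))"
  by (simp add: E_defs prod_eq_iff; algebra)
lemma dot3_smul_right: "dot3 w u (smul3 w l v) = emul w l (dot3 w u v)"
  by (metis dot3_smul_right_e prod_cases3)
lemma dot3_smul_left: "dot3 w (smul3 w l u) v = emul w l (dot3 w u v)"
  by (metis dot3_smul_left_e prod_cases3)
lemma dot3_zero_right[simp]: "dot3 w u zero3 = ezero"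
  by (cases u) (simp add: zero3_def E_defs)

lemma line_mem: assumes "v \<noteq> zero3" shows "proj_pt2 w v \<in> line2 w u \<longleftrightarrow> dot3 w u v = ezero"
proof
  assume "proj_pt2 w v \<in> line2 w u" then show "dot3 w u v = ezero"
    using proj_self unfolding line2_def by blast
next
  assume h: "dot3 w u v = ezero"
  have "\<forall>x\<in>proj_pt2 w v. dot3 w u x = ezero"
  proof
    fix x assume "x \<in> proj_pt2 w v"
    then obtain l where "l \<noteq> ezero" "x = smul3 w l v" by (blast elim: proj_E)
    then show "dot3 w u x = ezero" using h by (simp add: dot3_smul_right)
  qed
  then show "proj_pt2 w v \<in> line2 w u" using PG2_I[OF assms] unfolding line2_def by blast
qed

lemma line2_smul: "l \<noteq> ezero \<Longrightarrow> line2 w (smul3 w l u) = line2 w u"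
  by (auto simp: line2_def dot3_smul_left)

lemma test1: "dot3 w (u1,u2,u3) (u2, eneg u1, ezero) = ezero"
  by (simp add: E_defs prod_eq_iff; algebra)
lemma test2: "dot3 w (u1,u2,u3) (u3, ezero, eneg u1) = ezero"
  by (simp add: E_defs prod_eq_iff; algebra)
lemma test3: "dot3 w (u1,u2,u3) (ezero, u3, eneg u2) = ezero"
  by (simp add: E_defs prod_eq_iff; algebra)
lemma test1': "dot3 w (p1,p2,p3) (u2, eneg u1, ezero) = ezero \<Longrightarrow> emul w u1 p2 = emul w p1 u2"
  by (simp add: E_defs prod_eq_iff; algebra)
lemma test2': "dot3 w (p1,p2,p3) (u3, ezero, eneg u1) = ezero \<Longrightarrow> emul w u1 p3 = emul w p1 u3"
  by (simp add: E_defs prod_eq_iff; algebra)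
lemma test3': "dot3 w (p1,p2,p3) (ezero, u3, eneg u2) = ezero \<Longrightarrow> emul w u2 p3 = emul w p2 u3"
  by (simp add: E_defs prod_eq_iff; algebra)

lemma line_eq_iff:
  assumes u: "u \<noteq> zero3" and u': "u' \<noteq> zero3"
  shows "line2 w u' = line2 w u \<longleftrightarrow> u' \<in> proj_pt2 w u"
proof
  assume "u' \<in> proj_pt2 w u"
  then obtain l where "l \<noteq> ezero" "u' = smul3 w l u" by (blast elim: proj_E)
  then show "line2 w u' = line2 w u" by (simp add: line2_smul)
next
  assume eq: "line2 w u' = line2 w u"
  have H: "dot3 w u' v = ezero" if "dot3 w u v = ezero" for v
  proof (cases "v = zero3")
    case True then show ?thesis by simp
  next
    case False
    have "proj_pt2 w v \<in> line2 w u" using line_mem[OF False] that by simp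
    then have "proj_pt2 w v \<in> line2 w u'" using eq by simp
    then show ?thesis using line_mem[OF False] by simp
  qed
  obtain u1 u2 u3 where uu: "u = (u1,u2,u3)" by (cases u rule: prod_cases3)
  obtain p1 p2 p3 where pp: "u' = (p1,p2,p3)" by (cases u' rule: prod_cases3)
  have r1: "emul w u1 p2 = emul w p1 u2"
    using H[of "(u2, eneg u1, ezero)", unfolded uu pp] test1[of u1 u2 u3] test1' by blast
  have r2: "emul w u1 p3 = emul w p1 u3"
    using H[of "(u3, ezero, eneg u1)", unfolded uu pp] test2[of u1 u2 u3] test2' by blast
  have r3: "emul w u2 p3 = emul w p2 u3"
    using H[of "(ezero, u3, eneg u2)", unfolded uu pp] test3[of u1 u2 u3] test3' by blast
  have nz: "\<not> (p1 = ezero \<and> p2 = ezero \<and> p3 = ezero)" using u' pp by (simp add: zero3_def)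
  consider "u1 \<noteq> ezero" | "u2 \<noteq> ezero" | "u3 \<noteq> ezero" using u uu by (auto simp: zero3_def)
  then show "u' \<in> proj_pt2 w u"
  proof cases
    case 1
    have "smul3 w u1 u' = smul3 w p1 u" using r1 r2 emul_commute[of u1 p1] by (simp add: uu pp)
    moreover have "p1 \<noteq> ezero"
    proof
      assume "p1 = ezero" then have "p2 = ezero" "p3 = ezero" using r1 r2 1 by simp_all
      then show False using nz `p1 = ezero` by simp
    qed
    ultimately show ?thesis using 1 smul_in_proj by blast
  next
    case 2
    have "smul3 w u2 u' = smul3 w p2 u" using r1 r3 emul_commute[of u2 p2] emul_commute[of u2 p1]
        emul_commute[of u1 p2] by (simp add: uu pp)
    moreover have "p2 \<noteq> ezero"
    proof
      assume "p2 = ezero" then have "p1 = ezero" "p3 = ezero" using r1 r3 2 by (metis emul_eq_zero emul_zero)+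
      then show False using nz `p2 = ezero` by simp
    qed
    ultimately show ?thesis using 2 smul_in_proj by blast
  next
    case 3
    have "smul3 w u3 u' = smul3 w p3 u" using r2 r3 emul_commute[of u3 p3] emul_commute[of u3 p1]
        emul_commute[of u1 p3] emul_commute[of u3 p2] emul_commute[of u2 p3] by (simp add: uu pp)
    moreover have "p3 \<noteq> ezero"
    proof
      assume "p3 = ezero" then have "p1 = ezero" "p2 = ezero" using r2 r3 3 by (metis emul_eq_zero emul_zero)+
      then show False using nz `p3 = ezero` by simp
    qed
    ultimately show ?thesis using 3 smul_in_proj by blast
  qed
qed

end

context qf begin

definition nroot :: "'a ext \<Rightarrow> nat" where
  "nroot x = card {s. emul w s s = x}"

lemma eadd_neg_zero: "eadd x (eneg y) = ezero \<longleftrightarrow> x = y"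
  by (auto simp: E_defs prod_eq_iff)
lemma eadd_zero_neg: "eadd x y = ezero \<longleftrightarrow> x = eneg y"
  by (auto simp: E_defs prod_eq_iff eq_neg_iff_add_eq_0)
lemma eadd_cancel_right: "eadd x z = eadd y z \<longleftrightarrow> x = y"
  by (auto simp: E_defs prod_eq_iff)
lemma eadd_cancel_left: "eadd z x = eadd z y \<longleftrightarrow> x = y"
  by (auto simp: E_defs prod_eq_iff)
lemma eadd_zero[simp]: "eadd x ezero = x" "eadd ezero x = x"
  by (auto simp: E_defs)
lemma eneg_eneg[simp]: "eneg (eneg x) = x"
  by (simp add: eneg_def)
lemma eneg_zero_iff[simp]: "eneg x = ezero \<longleftrightarrow> x = ezero"
  by (auto simp: E_defs prod_eq_iff)

lemma sq_diff_id: "emul w (eadd t (eneg s)) (eadd t s) = eadd (emul w t t) (eneg (emul w s s))"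
  by (simp add: E_defs prod_eq_iff; algebra)
lemma neg_sq: "emul w (eneg s) (eneg s) = emul w s s"
  by (simp add: E_defs prod_eq_iff)

lemma self_neg: assumes "(x::'a) = - x" shows "x = 0"
proof -
  have "x + x = x + - x" using assms by (rule arg_cong)
  also have "\<dots> = 0" by simp
  finally have "x + x = 0" .
  then have "2 * x = 0" by (simp only: mult_2)
  then show ?thesis using two_nz by simp
qed

lemma s_neq_neg: assumes "(s::'a ext) \<noteq> ezero" shows "s \<noteq> eneg s"
proof
  assume h: "s = eneg s"
  have e1: "fst (eneg s) = - fst s" "snd (eneg s) = - snd s" by (simp_all add: eneg_def)
  from h have f1: "fst s = fst (eneg s)" by (rule arg_cong)
  from h have f2: "snd s = snd (eneg s)" by (rule arg_cong)
  have "fst s = - fst s" using f1 e1(1) by (rule trans)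
  then have a: "fst s = 0" by (rule self_neg)
  have "snd s = - snd s" using f2 e1(2) by (rule trans)
  then have b: "snd s = 0" by (rule self_neg)
  from a b have "fst s = 0" "snd s = 0" .
  then show False using assms by (simp add: ezero_def prod_eq_iff)
qed

lemma roots_sq: "{t. emul w t t = emul w s s} = {s, eneg s}"
proof -
  have "emul w t t = emul w s s \<longleftrightarrow> t = s \<or> t = eneg s" for t
  proof -
    have "emul w t t = emul w s s \<longleftrightarrow> eadd (emul w t t) (eneg (emul w s s)) = ezero"
      by (simp add: eadd_neg_zero)
    also have "\<dots> \<longleftrightarrow> emul w (eadd t (eneg s)) (eadd t s) = ezero" by (simp add: sq_diff_id)
    also have "\<dots> \<longleftrightarrow> t = s \<or> t = eneg s" by (simp add: eadd_neg_zero eadd_zero_neg)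
    finally show ?thesis .
  qed
  then show ?thesis by auto
qed

lemma nroot_sq: "s \<noteq> ezero \<Longrightarrow> nroot (emul w s s) = 2"
  unfolding nroot_def roots_sq using s_neq_neg by simp

lemma nroot_zero: "nroot ezero = 1"
  unfolding nroot_def using roots_sq[of ezero] by (simp add: E_defs)

lemma nroot_nsq: "\<not> (\<exists>s. emul w s s = x) \<Longrightarrow> nroot x = 0"
  unfolding nroot_def by simp

lemma nroot_2_iff: "nroot x = 2 \<longleftrightarrow> (\<exists>s. s \<noteq> ezero \<and> emul w s s = x)"
proof
  assume h: "nroot x = 2"
  then obtain s where s: "emul w s s = x" using nroot_nsq by fastforce
  show "\<exists>s. s \<noteq> ezero \<and> emul w s s = x"
  proof (cases "s = ezero")
    case True then have "x = ezero" using s by simp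
    then show ?thesis using h nroot_zero by simp
  next
    case False then show ?thesis using s by blast
  qed
next
  assume "\<exists>s. s \<noteq> ezero \<and> emul w s s = x"
  then show "nroot x = 2" using nroot_sq by blast
qed

lemma sq_mul_id: "emul w (emul w l m) (emul w l m) = emul w (emul w l l) (emul w m m)"
  by (simp add: E_defs prod_eq_iff; algebra)

lemma nroot_scale: assumes l: "l \<noteq> ezero" shows "nroot (emul w (emul w l l) x) = nroot x"
proof -
  have "{t. emul w t t = emul w (emul w l l) x} = emul w l ` {s. emul w s s = x}"
  proof (intro equalityI subsetI)
    fix t assume "t \<in> {t. emul w t t = emul w (emul w l l) x}"
    then have t: "emul w t t = emul w (emul w l l) x" by simp
    let ?s = "emul w (einv l) t"
    have lt: "emul w l ?s = t" using l by (simp add: emul_assoc[symmetric] emul_commute[of l] einv_left)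
    have "emul w (emul w l l) (emul w ?s ?s) = emul w t t" using lt sq_mul_id[of l ?s] by simp
    then have "emul w ?s ?s = x" using t emul_cancel_left[of "emul w l l"] l by simp
    then show "t \<in> emul w l ` {s. emul w s s = x}"
    proof (intro image_eqI)
      show "t = emul w l ?s" using lt by simp
    qed simp
  next
    fix t assume "t \<in> emul w l ` {s. emul w s s = x}"
    then obtain s where "emul w s s = x" "t = emul w l s" by blast
    then show "t \<in> {t. emul w t t = emul w (emul w l l) x}" by (simp add: sq_mul_id)
  qed
  moreover have "inj_on (emul w l) {s. emul w s s = x}"
    using emul_cancel_left[OF l] by (auto simp: inj_on_def)
  ultimately show ?thesis unfolding nroot_def by (simp add: card_image)
qed

lemma nz_roots: "card {t. t \<noteq> ezero \<and> emul w t t = x} = (if nroot x = 2 then 2 else 0)"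
proof (cases "x = ezero")
  case True
  then show ?thesis using nroot_zero by simp
next
  case False
  then have eq: "{t. t \<noteq> ezero \<and> emul w t t = x} = {t. emul w t t = x}" by auto
  show ?thesis
  proof (cases "\<exists>s. emul w s s = x")
    case True
    then obtain s where s: "emul w s s = x" by blast
    then have "s \<noteq> ezero" using False by auto
    then have n2: "nroot x = 2" using nroot_sq s by blast
    have "card {t. t \<noteq> ezero \<and> emul w t t = x} = nroot x" using eq unfolding nroot_def by simp
    then show ?thesis using n2 by simp
  next
    case False
    then have n0: "nroot x = 0" using nroot_nsq by blast
    have "card {t. t \<noteq> ezero \<and> emul w t t = x} = nroot x" using eq unfolding nroot_def by simp
    then show ?thesis using n0 by simp
  qed
qed

end

context qf begin

definition bq :: "'a ext \<Rightarrow> 'a ext \<Rightarrow> 'a ext \<Rightarrow> 'a ext \<times> 'a ext \<Rightarrow> 'a ext" where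
  "bq A B C p = eadd (eadd (emul w A (emul w (fst p) (fst p))) (emul w B (emul w (fst p) (snd p))))
      (emul w C (emul w (snd p) (snd p)))"

definition disc :: "'a ext \<Rightarrow> 'a ext \<Rightarrow> 'a ext \<Rightarrow> 'a ext" where
  "disc A B C = eadd (emul w B B) (eneg (emul w (4,0) (emul w A C)))"

lemma id1: "emul w (eadd (emul w (2,0) (emul w A y1)) (emul w B y2)) (eadd (emul w (2,0) (emul w A y1)) (emul w B y2))
   = eadd (emul w (emul w (4,0) A) (bq A B C (y1,y2))) (emul w (disc A B C) (emul w y2 y2))"
  unfolding bq_def disc_def by (simp add: E_defs prod_eq_iff; algebra)

lemma id2: "bq A B C (eadd s (eneg (emul w B t)), emul w (2,0) (emul w A t))
   = emul w A (eadd (emul w s s) (eneg (emul w (disc A B C) (emul w t t))))"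
  unfolding bq_def disc_def by (simp add: E_defs prod_eq_iff; algebra)

lemma bq_y2_zero: "bq A B C (y1, ezero) = emul w A (emul w y1 y1)"
  unfolding bq_def by (simp add: E_defs)

lemma card_nz: "card {t::'a ext. t \<noteq> ezero} = card (UNIV :: 'a ext set) - 1"
proof -
  have "{t::'a ext. t \<noteq> ezero} = UNIV - {ezero}" by auto
  then show ?thesis by (simp add: card_Diff_singleton)
qed

lemma BQ:
  assumes A: "A \<noteq> ezero"
  shows "card {p. p \<noteq> (ezero,ezero) \<and> bq A B C p = ezero} = (card (UNIV :: 'a ext set) - 1) * nroot (disc A B C)"
proof -
  define D where "D = disc A B C"
  let ?S1 = "{p. p \<noteq> (ezero,ezero) \<and> bq A B C p = ezero}"
  let ?S2 = "{p. snd p \<noteq> ezero \<and> emul w (fst p) (fst p) = emul w D (emul w (snd p) (snd p))}"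
  have A2: "emul w (2,0) A \<noteq> ezero" using A two_L_nz by simp
  have c2: "card ?S2 = nroot D * (card (UNIV :: 'a ext set) - 1)"
  proof -
    let ?f = "\<lambda>q. (emul w (fst q) (snd q), snd q)"
    have eq: "?S2 = ?f ` ({r. emul w r r = D} \<times> {t. t \<noteq> ezero})"
    proof (intro equalityI subsetI)
      fix p assume p: "p \<in> ?S2"
      let ?r = "emul w (fst p) (einv (snd p))"
      have rt: "emul w ?r (snd p) = fst p" using p by (simp add: emul_assoc einv_left)
      have "emul w (emul w (snd p) (snd p)) (emul w ?r ?r) = emul w (emul w (snd p) (snd p)) D"
        using p rt sq_mul_id[of ?r "snd p"] by (simp add: emul_commute)
      then have "emul w ?r ?r = D" using p emul_cancel_left[of "emul w (snd p) (snd p)"] by simp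
      then have "(?r, snd p) \<in> {r. emul w r r = D} \<times> {t. t \<noteq> ezero}" using p by simp
      moreover have "p = ?f (?r, snd p)" using rt by simp
      ultimately show "p \<in> ?f ` ({r. emul w r r = D} \<times> {t. t \<noteq> ezero})" by blast
    next
      fix p assume "p \<in> ?f ` ({r. emul w r r = D} \<times> {t. t \<noteq> ezero})"
      then obtain q where q: "q \<in> {r. emul w r r = D} \<times> {t. t \<noteq> ezero}" "p = ?f q" by blast
      then show "p \<in> ?S2" using sq_mul_id[of "fst q" "snd q"] by (auto simp: mem_Times_iff)
    qed
    have inj: "inj_on ?f ({r. emul w r r = D} \<times> {t. t \<noteq> ezero})"
    proof (rule inj_onI)
      fix q q' assume q: "q \<in> {r. emul w r r = D} \<times> {t. t \<noteq> ezero}" and q': "q' \<in> {r. emul w r r = D} \<times> {t. t \<noteq> ezero}"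
        and e: "?f q = ?f q'"
      then have s: "snd q = snd q'" by simp
      then have "emul w (fst q) (snd q) = emul w (fst q') (snd q)" using e by simp
      then have "fst q = fst q'" using q emul_cancel_right[of "snd q"] by (auto simp: mem_Times_iff)
      then show "q = q'" using s by (simp add: prod_eq_iff)
    qed
    show ?thesis using eq inj card_nz by (simp add: card_image card_cartesian_product nroot_def)
  qed
  have le1: "card ?S1 \<le> card ?S2"
  proof (rule card_inj_on_le)
    let ?f = "\<lambda>p. (eadd (emul w (2,0) (emul w A (fst p))) (emul w B (snd p)), snd p)"
    show "inj_on ?f ?S1"
    proof (rule inj_onI)
      fix p p' assume e: "?f p = ?f p'"
      then have s: "snd p = snd p'" by simp
      then have "eadd (emul w (2,0) (emul w A (fst p))) (emul w B (snd p)) = eadd (emul w (2,0) (emul w A (fst p'))) (emul w B (snd p))"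
        using e by simp
      then have "emul w (emul w (2,0) A) (fst p) = emul w (emul w (2,0) A) (fst p')"
        by (simp add: eadd_cancel_right emul_assoc)
      then have "fst p = fst p'" using A2 emul_cancel_left by blast
      then show "p = p'" using s by (simp add: prod_eq_iff)
    qed
    show "?f ` ?S1 \<subseteq> ?S2"
    proof
      fix x assume "x \<in> ?f ` ?S1"
      then obtain p where p: "p \<noteq> (ezero,ezero)" "bq A B C p = ezero" "x = ?f p" by blast
      have "snd p \<noteq> ezero"
      proof
        assume "snd p = ezero"
        then have "bq A B C p = emul w A (emul w (fst p) (fst p))" using bq_y2_zero[of A B C "fst p"]
          by (metis prod.collapse)
        then have "emul w A (emul w (fst p) (fst p)) = ezero" using p by simp
        then have "fst p = ezero" using A by simp
        then show False using p `snd p = ezero` by (simp add: prod_eq_iff)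
      qed
      moreover have "emul w (fst x) (fst x) = emul w D (emul w (snd x) (snd x))"
        using id1[of A "fst p" B "snd p" C] p by (simp add: D_def)
      ultimately show "x \<in> ?S2" using p by simp
    qed
  qed simp
  have le2: "card ?S2 \<le> card ?S1"
  proof (rule card_inj_on_le)
    let ?f = "\<lambda>p. (eadd (fst p) (eneg (emul w B (snd p))), emul w (2,0) (emul w A (snd p)))"
    show "inj_on ?f ?S2"
    proof (rule inj_onI)
      fix p p' assume e: "?f p = ?f p'"
      then have "emul w (emul w (2,0) A) (snd p) = emul w (emul w (2,0) A) (snd p')" by (simp add: emul_assoc)
      then have s: "snd p = snd p'" using A2 emul_cancel_left by blast
      then have "fst p = fst p'" using e by (simp add: eadd_cancel_right)
      then show "p = p'" using s by (simp add: prod_eq_iff)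
    qed
    show "?f ` ?S2 \<subseteq> ?S1"
    proof
      fix x assume "x \<in> ?f ` ?S2"
      then obtain p where p: "snd p \<noteq> ezero" "emul w (fst p) (fst p) = emul w D (emul w (snd p) (snd p))" "x = ?f p" by blast
      have "snd x \<noteq> ezero" using p A2 by (simp add: emul_assoc[symmetric])
      moreover have "bq A B C x = ezero"
        using id2[of A B C "fst p" "snd p"] p by (simp add: D_def eadd_neg_zero)
      ultimately show "x \<in> ?S1" by (auto simp: prod_eq_iff)
    qed
  qed simp
  show ?thesis using le1 le2 c2 D_def by simp
qed

end

context qf begin

definition Fa :: "'a ext \<Rightarrow> 'a ext \<times> 'a ext \<times> 'a ext \<Rightarrow> 'a ext" where
  "Fa \<alpha> y = (case y of (y1,y2,y3) \<Rightarrow> eadd (emul w y1 y1) (emul w \<alpha> (emul w y2 y3)))"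

lemma Fa_simp[simp]: "Fa \<alpha> (y1,y2,y3) = eadd (emul w y1 y1) (emul w \<alpha> (emul w y2 y3))"
  by (simp add: Fa_def)

lemma idA: "bq z3 (eneg (emul w \<alpha> z1)) (eneg (emul w \<alpha> z2)) (y1,y2)
  = eadd (emul w z3 (Fa \<alpha> (y1,y2,y3))) (eneg (emul w \<alpha> (emul w y2 (dot3 w (z1,z2,z3) (y1,y2,y3)))))"
  unfolding bq_def by (simp add: E_defs prod_eq_iff; algebra)

lemma idB: "dot3 w (z1,z2,z3) (emul w z3 p1, emul w z3 p2, eneg (eadd (emul w z1 p1) (emul w z2 p2))) = ezero"
  by (simp add: E_defs prod_eq_iff; algebra)

lemma idC: "Fa \<alpha> (emul w z3 p1, emul w z3 p2, eneg (eadd (emul w z1 p1) (emul w z2 p2)))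
   = emul w z3 (bq z3 (eneg (emul w \<alpha> z1)) (eneg (emul w \<alpha> z2)) (p1,p2))"
  unfolding bq_def by (simp add: E_defs prod_eq_iff; algebra)

lemma idD: "disc z3 (eneg (emul w \<alpha> z1)) (eneg (emul w \<alpha> z2))
   = eadd (emul w (emul w \<alpha> \<alpha>) (emul w z1 z1)) (emul w (emul w \<alpha> (4,0)) (emul w z2 z3))"
  unfolding disc_def by (simp add: E_defs prod_eq_iff; algebra)

lemma idD': "emul w (emul w \<alpha> \<alpha>) (eadd (emul w z1 z1) (emul w \<gamma> (emul w z2 z3)))
   = eadd (emul w (emul w \<alpha> \<alpha>) (emul w z1 z1)) (emul w (emul w \<alpha> (emul w \<alpha> \<gamma>)) (emul w z2 z3))"
  by (simp add: E_defs prod_eq_iff; algebra)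

lemma G3:
  assumes z3: "z3 \<noteq> ezero" and \<alpha>: "\<alpha> \<noteq> ezero" and \<gamma>: "emul w \<alpha> \<gamma> = (4,0)"
  shows "card {y. y \<noteq> zero3 \<and> dot3 w (z1,z2,z3) y = ezero \<and> Fa \<alpha> y = ezero}
     = (card (UNIV :: 'a ext set) - 1) * nroot (eadd (emul w z1 z1) (emul w \<gamma> (emul w z2 z3)))"
proof -
  let ?SY = "{y. y \<noteq> zero3 \<and> dot3 w (z1,z2,z3) y = ezero \<and> Fa \<alpha> y = ezero}"
  let ?B = "bq z3 (eneg (emul w \<alpha> z1)) (eneg (emul w \<alpha> z2))"
  let ?SG = "{p. p \<noteq> (ezero,ezero) \<and> ?B p = ezero}"
  have cG: "card ?SG = (card (UNIV :: 'a ext set) - 1) * nroot (eadd (emul w z1 z1) (emul w \<gamma> (emul w z2 z3)))"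
  proof -
    have "disc z3 (eneg (emul w \<alpha> z1)) (eneg (emul w \<alpha> z2))
      = emul w (emul w \<alpha> \<alpha>) (eadd (emul w z1 z1) (emul w \<gamma> (emul w z2 z3)))"
      using idD[of z3 \<alpha> z1 z2] idD'[of \<alpha> z1 \<gamma> z2 z3] \<gamma> by simp
    then show ?thesis using BQ[OF z3, of "eneg (emul w \<alpha> z1)" "eneg (emul w \<alpha> z2)"]
      nroot_scale[OF \<alpha>] by simp
  qed
  have le1: "card ?SY \<le> card ?SG"
  proof (rule card_inj_on_le)
    let ?f = "\<lambda>y. (fst y, fst (snd y))"
    show "inj_on ?f ?SY"
    proof (rule inj_onI)
      fix y y' assume y: "y \<in> ?SY" and y': "y' \<in> ?SY" and e: "?f y = ?f y'"
      obtain y1 y2 y3 where yy: "y = (y1,y2,y3)" by (cases y rule: prod_cases3)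
      obtain y1' y2' y3' where yy': "y' = (y1',y2',y3')" by (cases y' rule: prod_cases3)
      have 1: "y1' = y1" "y2' = y2" using e yy yy' by simp_all
      have "dot3 w (z1,z2,z3) (y1,y2,y3) = dot3 w (z1,z2,z3) (y1,y2,y3')" using y y' yy yy' 1 by simp
      then have "emul w z3 y3 = emul w z3 y3'" by (simp add: eadd_cancel_left)
      then have "y3 = y3'" using z3 emul_cancel_left by blast
      then show "y = y'" using yy yy' 1 by simp
    qed
    show "?f ` ?SY \<subseteq> ?SG"
    proof
      fix x assume "x \<in> ?f ` ?SY"
      then obtain y where y: "y \<in> ?SY" "x = ?f y" by blast
      obtain y1 y2 y3 where yy: "y = (y1,y2,y3)" by (cases y rule: prod_cases3)
      have "(y1,y2) \<noteq> (ezero,ezero)"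
      proof
        assume "(y1,y2) = (ezero,ezero)"
        then have "emul w z3 y3 = ezero" using y yy by simp
        then have "y3 = ezero" using z3 by simp
        then show False using y yy `(y1,y2) = (ezero,ezero)` by (simp add: zero3_def)
      qed
      moreover have "?B (y1,y2) = ezero" using idA[of z3 \<alpha> z1 z2 y1 y2 y3] y yy by simp
      ultimately show "x \<in> ?SG" using y yy by simp
    qed
  qed simp
  have le2: "card ?SG \<le> card ?SY"
  proof (rule card_inj_on_le)
    let ?f = "\<lambda>p. (emul w z3 (fst p), emul w z3 (snd p), eneg (eadd (emul w z1 (fst p)) (emul w z2 (snd p))))"
    show "inj_on ?f ?SG"
    proof (rule inj_onI)
      fix p p' assume e: "?f p = ?f p'"
      then have "emul w z3 (fst p) = emul w z3 (fst p')" "emul w z3 (snd p) = emul w z3 (snd p')" by simp_all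
      then have "fst p = fst p'" "snd p = snd p'" using z3 emul_cancel_left by blast+
      then show "p = p'" by (simp add: prod_eq_iff)
    qed
    show "?f ` ?SG \<subseteq> ?SY"
    proof
      fix x assume "x \<in> ?f ` ?SG"
      then obtain p where p: "p \<in> ?SG" "x = ?f p" by blast
      obtain p1 p2 where pp: "p = (p1,p2)" by (cases p)
      have "x \<noteq> zero3"
      proof
        assume "x = zero3"
        then have "emul w z3 p1 = ezero" "emul w z3 p2 = ezero" using p pp by (simp_all add: zero3_def)
        then have "p1 = ezero" "p2 = ezero" using z3 by simp_all
        then show False using p pp by simp
      qed
      moreover have "dot3 w (z1,z2,z3) x = ezero" using idB[of z1 z2 z3 p1 p2] p pp by simp
      moreover have "Fa \<alpha> x = ezero" using idC[of \<alpha> z3 p1 p2 z1 z2] p pp by simp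
      ultimately show "x \<in> ?SY" by simp
    qed
  qed simp
  show ?thesis using le1 le2 cG by simp
qed

lemma swap_dot: "dot3 w (z1,z2,ezero) (y1,y2,y3) = dot3 w (z1,ezero,z2) (y1,y3,y2)"
  by (simp add: E_defs prod_eq_iff)
lemma swap_Fa: "Fa \<alpha> (y1,y2,y3) = Fa \<alpha> (y1,y3,y2)"
  by (simp add: E_defs prod_eq_iff; algebra)

lemma G:
  assumes z: "(z1,z2,z3) \<noteq> zero3" and \<alpha>: "\<alpha> \<noteq> ezero" and \<gamma>: "emul w \<alpha> \<gamma> = (4,0)"
  shows "card {y. y \<noteq> zero3 \<and> dot3 w (z1,z2,z3) y = ezero \<and> Fa \<alpha> y = ezero}
     = (card (UNIV :: 'a ext set) - 1) * nroot (eadd (emul w z1 z1) (emul w \<gamma> (emul w z2 z3)))"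
proof (cases "z3 = ezero")
  case False then show ?thesis using G3 \<alpha> \<gamma> by blast
next
  case z3: True
  show ?thesis
  proof (cases "z2 = ezero")
    case False
    let ?s = "\<lambda>y::'a ext \<times> 'a ext \<times> 'a ext. (fst y, snd (snd y), fst (snd y))"
    have bij: "bij ?s" by (rule o_bij[where g = ?s]) auto
    have "card {y. y \<noteq> zero3 \<and> dot3 w (z1,z2,z3) y = ezero \<and> Fa \<alpha> y = ezero}
        = card {y. ?s y \<noteq> zero3 \<and> dot3 w (z1,ezero,z2) (?s y) = ezero \<and> Fa \<alpha> (?s y) = ezero}"
    proof (rule arg_cong[where f = card], rule Collect_cong)
      fix y :: "'a ext \<times> 'a ext \<times> 'a ext"
      obtain y1 y2 y3 where yy: "y = (y1,y2,y3)" by (cases y rule: prod_cases3)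
      show "(y \<noteq> zero3 \<and> dot3 w (z1,z2,z3) y = ezero \<and> Fa \<alpha> y = ezero) =
            (?s y \<noteq> zero3 \<and> dot3 w (z1,ezero,z2) (?s y) = ezero \<and> Fa \<alpha> (?s y) = ezero)"
        using swap_dot[of z1 z2 y1 y2 y3] swap_Fa[of \<alpha> y1 y2 y3] z3 yy by (auto simp: zero3_def)
    qed
    also have "\<dots> = card {y. y \<noteq> zero3 \<and> dot3 w (z1,ezero,z2) y = ezero \<and> Fa \<alpha> y = ezero}"
      by (rule card_bij_pre[OF bij, where P = "\<lambda>y. y \<noteq> zero3 \<and> dot3 w (z1,ezero,z2) y = ezero \<and> Fa \<alpha> y = ezero"])
    also have "\<dots> = (card (UNIV :: 'a ext set) - 1) * nroot (eadd (emul w z1 z1) (emul w \<gamma> (emul w ezero z2)))"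
      using G3[OF False \<alpha> \<gamma>] by blast
    finally show ?thesis using z3 by simp
  next
    case z2: True
    then have z1: "z1 \<noteq> ezero" using z z3 by (simp add: zero3_def)
    let ?A = "(\<lambda>t. (ezero::'a ext, t, ezero::'a ext)) ` {t::'a ext. t \<noteq> ezero}"
    let ?B = "(\<lambda>t. (ezero::'a ext, ezero::'a ext, t)) ` {t::'a ext. t \<noteq> ezero}"
    have eq: "{y. y \<noteq> zero3 \<and> dot3 w (z1,z2,z3) y = ezero \<and> Fa \<alpha> y = ezero} = ?A \<union> ?B"
    proof (intro equalityI subsetI)
      fix y assume y: "y \<in> {y. y \<noteq> zero3 \<and> dot3 w (z1,z2,z3) y = ezero \<and> Fa \<alpha> y = ezero}"
      obtain y1 y2 y3 where yy: "y = (y1,y2,y3)" by (cases y rule: prod_cases3)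
      have "emul w z1 y1 = ezero" using y yy z2 z3 by simp
      then have y1: "y1 = ezero" using z1 by simp
      then have "emul w \<alpha> (emul w y2 y3) = ezero" using y yy by simp
      then have "y2 = ezero \<or> y3 = ezero" using \<alpha> by simp
      moreover have "\<not> (y2 = ezero \<and> y3 = ezero)" using y yy y1 by (auto simp: zero3_def)
      ultimately show "y \<in> ?A \<union> ?B" using yy y1 by blast
    next
      fix y assume "y \<in> ?A \<union> ?B"
      then show "y \<in> {y. y \<noteq> zero3 \<and> dot3 w (z1,z2,z3) y = ezero \<and> Fa \<alpha> y = ezero}"
        using z2 z3 by (auto simp: zero3_def)
    qed
    have cA: "card ?A = card (UNIV :: 'a ext set) - 1"
      using card_nz by (subst card_image) (auto simp: inj_on_def)
    have cB: "card ?B = card (UNIV :: 'a ext set) - 1"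
      using card_nz by (subst card_image) (auto simp: inj_on_def)
    have "?A \<inter> ?B = {}" by auto
    then have "card (?A \<union> ?B) = 2 * (card (UNIV :: 'a ext set) - 1)"
      using cA cB by (simp add: card_Un_disjoint)
    moreover have "nroot (eadd (emul w z1 z1) (emul w \<gamma> (emul w z2 z3))) = 2"
      using z2 z3 nroot_sq[OF z1] by simp
    ultimately show ?thesis using eq by simp
  qed
qed

end

context qf begin

lemma nroot_1_iff: "nroot x = 1 \<longleftrightarrow> x = ezero"
proof
  assume h: "nroot x = 1"
  show "x = ezero"
  proof (rule ccontr)
    assume x: "x \<noteq> ezero"
    show False
    proof (cases "\<exists>s. emul w s s = x")
      case True
      then obtain s where s: "emul w s s = x" by blast
      then have "s \<noteq> ezero" using x by auto
      then have "nroot x = 2" using nroot_sq[of s] s by simp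
      then show False using h by simp
    next
      case False then show False using nroot_nsq h by simp
    qed
  qed
qed (simp add: nroot_zero)

lemma Qm_pos: "card (UNIV :: 'a ext set) - 1 > 0"
proof -
  have "{ezero, (1,0)} \<subseteq> (UNIV :: 'a ext set)" by simp
  then have "card {ezero::'a ext, (1,0)} \<le> card (UNIV :: 'a ext set)" by (rule card_mono[OF finite_UNIV])
  moreover have "card {ezero::'a ext, (1,0)} = 2" by (simp add: ezero_def)
  ultimately show ?thesis by simp
qed

lemma dot3_comm_e: "dot3 w (u1,u2,u3) (v1,v2,v3) = dot3 w (v1,v2,v3) (u1,u2,u3)"
  by (simp add: E_defs prod_eq_iff; algebra)
lemma dot3_comm: "dot3 w u v = dot3 w v u"
  by (metis dot3_comm_e prod_cases3)

lemma conic_smul_e: "conic_form w a b c d e (smul3 w l (X,Y,Z)) = emul w (emul w l l) (conic_form w a b c d e (X,Y,Z))"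
  unfolding conic_form_def by (simp add: E_defs prod_eq_iff; algebra)
lemma conic_smul: "conic_form w a b c d e (smul3 w l v) = emul w (emul w l l) (conic_form w a b c d e v)"
  by (metis conic_smul_e prod_cases3)

lemma eneg_ezero[simp]: "eneg ezero = ezero" by (simp add: E_defs)

lemma four_nz: "((4::'a), (0::'a)) \<noteq> ezero"
proof -
  have "(2::'a) * 2 \<noteq> 0" using two_nz mult_eq_0_iff[of "2::'a" 2] by blast
  then show ?thesis by (simp add: ezero_def)
qed

end

locale conic = qf +
  fixes a b c e \<delta> :: "'a ext"
  assumes dsq: "emul w \<delta> \<delta> = eadd (eadd (eneg (emul w (emul w b c) (1,0))) (emul w a (emul w (1,0) (1,0))))
               (emul w (emul w b b) e)"
    and dnz: "\<delta> \<noteq> ezero"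
begin

definition Tm :: "'a ext \<times> 'a ext \<times> 'a ext \<Rightarrow> 'a ext \<times> 'a ext \<times> 'a ext" where
  "Tm v = (case v of (X,Y,Z) \<Rightarrow> (emul w \<delta> X, eadd (eadd Y (emul w (eadd c (eneg (emul w e b))) X)) (emul w e Z),
      eadd (emul w b X) Z))"

definition Sm :: "'a ext \<times> 'a ext \<times> 'a ext \<Rightarrow> 'a ext \<times> 'a ext \<times> 'a ext" where
  "Sm u = (case u of (u1,u2,u3) \<Rightarrow> (eadd (eadd u1 (eneg (emul w b u3))) (eneg (emul w (eadd c (eneg (emul w (2,0) (emul w e b)))) u2)),
      emul w \<delta> u2, emul w \<delta> (eadd u3 (eneg (emul w e u2)))))"

lemma Tm_simp: "Tm (X,Y,Z) = (emul w \<delta> X, eadd (eadd Y (emul w (eadd c (eneg (emul w e b))) X)) (emul w e Z),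
      eadd (emul w b X) Z)" by (simp add: Tm_def)
lemma Sm_simp: "Sm (u1,u2,u3) = (eadd (eadd u1 (eneg (emul w b u3))) (eneg (emul w (eadd c (eneg (emul w (2,0) (emul w e b)))) u2)),
      emul w \<delta> u2, emul w \<delta> (eadd u3 (eneg (emul w e u2))))" by (simp add: Sm_def)

abbreviation dC where "dC \<equiv> eadd (eadd (eneg (emul w (emul w b c) (1,0))) (emul w a (emul w (1,0) (1,0))))
               (emul w (emul w b b) e)"

lemma I1_e: "conic_form w a b c (1,0) e (X,Y,Z) = eadd (Fa (1,0) (Tm (X,Y,Z))) (emul w (eadd dC (eneg (emul w \<delta> \<delta>))) (emul w X X))"
  unfolding conic_form_def Tm_simp by (simp add: E_defs prod_eq_iff; algebra)

lemma I1: "conic_form w a b c (1,0) e v = Fa (1,0) (Tm v)"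
proof -
  obtain X Y Z where "v = (X,Y,Z)" by (cases v rule: prod_cases3)
  moreover have "eadd dC (eneg (emul w \<delta> \<delta>)) = ezero" using dsq by (simp add: eadd_neg_zero)
  ultimately show ?thesis using I1_e by simp
qed

lemma I2_e: "emul w \<delta> (dot3 w (u1,u2,u3) (X,Y,Z)) = dot3 w (Sm (u1,u2,u3)) (Tm (X,Y,Z))"
  unfolding Tm_simp Sm_simp by (simp add: E_defs prod_eq_iff; algebra)

lemma I2: "emul w \<delta> (dot3 w u v) = dot3 w (Sm u) (Tm v)"
  by (metis I2_e prod_cases3)

lemma dot_iff: "dot3 w u v = ezero \<longleftrightarrow> dot3 w (Sm u) (Tm v) = ezero"
  using I2[of u v] dnz by (metis emul_eq_zero)

lemma Tm_inj: "inj Tm"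
proof (rule injI)
  fix v v' assume h: "Tm v = Tm v'"
  obtain X Y Z where vv: "v = (X,Y,Z)" by (cases v rule: prod_cases3)
  obtain X' Y' Z' where vv': "v' = (X',Y',Z')" by (cases v' rule: prod_cases3)
  have "emul w \<delta> X = emul w \<delta> X'" using h vv vv' by (simp add: Tm_simp)
  then have x: "X = X'" using dnz emul_cancel_left by blast
  have "eadd (emul w b X) Z = eadd (emul w b X) Z'" using h vv vv' x by (simp add: Tm_simp)
  then have z: "Z = Z'" by (simp add: eadd_cancel_left)
  have "eadd (eadd Y (emul w (eadd c (eneg (emul w e b))) X)) (emul w e Z) =
        eadd (eadd Y' (emul w (eadd c (eneg (emul w e b))) X)) (emul w e Z)" using h vv vv' x z by (simp add: Tm_simp)
  then have "Y = Y'" by (simp add: eadd_cancel_right)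
  then show "v = v'" using vv vv' x z by simp
qed

lemma Sm_inj: "inj Sm"
proof (rule injI)
  fix u u' assume h: "Sm u = Sm u'"
  obtain X Y Z where vv: "u = (X,Y,Z)" by (cases u rule: prod_cases3)
  obtain X' Y' Z' where vv': "u' = (X',Y',Z')" by (cases u' rule: prod_cases3)
  have "emul w \<delta> Y = emul w \<delta> Y'" using h vv vv' by (simp add: Sm_simp)
  then have y: "Y = Y'" using dnz emul_cancel_left by blast
  have "emul w \<delta> (eadd Z (eneg (emul w e Y))) = emul w \<delta> (eadd Z' (eneg (emul w e Y)))" using h vv vv' y by (simp add: Sm_simp)
  then have "eadd Z (eneg (emul w e Y)) = eadd Z' (eneg (emul w e Y))" using dnz emul_cancel_left by blast
  then have z: "Z = Z'" by (simp add: eadd_cancel_right)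
  have "eadd (eadd X (eneg (emul w b Z))) (eneg (emul w (eadd c (eneg (emul w (2,0) (emul w e b)))) Y)) =
        eadd (eadd X' (eneg (emul w b Z))) (eneg (emul w (eadd c (eneg (emul w (2,0) (emul w e b)))) Y))"
    using h vv vv' y z by (simp add: Sm_simp)
  then have "X = X'" by (simp add: eadd_cancel_right)
  then show "u = u'" using vv vv' y z by simp
qed

lemma inj_bij: "inj (f :: 'a ext \<times> 'a ext \<times> 'a ext \<Rightarrow> 'a ext \<times> 'a ext \<times> 'a ext) \<Longrightarrow> bij f"
  using finite_UNIV_inj_surj[of f] by (simp add: bij_def)

lemma Tm_zero: "Tm zero3 = zero3" by (simp add: zero3_def Tm_simp)
lemma Sm_zero: "Sm zero3 = zero3" by (simp add: zero3_def Sm_simp)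
lemma Tm_nz: "Tm v = zero3 \<longleftrightarrow> v = zero3" using Tm_inj Tm_zero by (metis injD)
lemma Sm_nz: "Sm v = zero3 \<longleftrightarrow> v = zero3" using Sm_inj Sm_zero by (metis injD)

end

context conic begin

lemma line_conic_eq: "line2 w u \<inter> conic_pts w a b c (1,0) e =
   {P \<in> PG2 w. \<forall>y\<in>P. dot3 w u y = ezero \<and> conic_form w a b c (1,0) e y = ezero}"
  unfolding line2_def conic_pts_def by blast

lemma L1: "card (line2 w u \<inter> conic_pts w a b c (1,0) e) * (card (UNIV :: 'a ext set) - 1)
   = card {y. y \<noteq> zero3 \<and> dot3 w u y = ezero \<and> conic_form w a b c (1,0) e y = ezero}"
  unfolding line_conic_eq by (rule cls_count) (simp add: dot3_smul_right conic_smul)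

lemma L2: assumes u: "u \<noteq> zero3"
  shows "card {y. y \<noteq> zero3 \<and> dot3 w u y = ezero \<and> conic_form w a b c (1,0) e y = ezero}
   = (card (UNIV :: 'a ext set) - 1) * nroot (Fa (4,0) (Sm u))"
proof -
  obtain z1 z2 z3 where zz: "Sm u = (z1,z2,z3)" by (cases "Sm u" rule: prod_cases3)
  define P where "P = (\<lambda>x. x \<noteq> zero3 \<and> dot3 w (z1,z2,z3) x = ezero \<and> Fa (1,0) x = ezero)"
  have e1: "{y. y \<noteq> zero3 \<and> dot3 w u y = ezero \<and> conic_form w a b c (1,0) e y = ezero} = {y. P (Tm y)}"
  proof (rule Collect_cong)
    fix y
    have "dot3 w u y = ezero \<longleftrightarrow> dot3 w (z1,z2,z3) (Tm y) = ezero" using dot_iff[of u y] zz by simp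
    moreover have "conic_form w a b c (1,0) e y = Fa (1,0) (Tm y)" by (rule I1)
    moreover have "y \<noteq> zero3 \<longleftrightarrow> Tm y \<noteq> zero3" using Tm_nz[of y] by simp
    ultimately show "(y \<noteq> zero3 \<and> dot3 w u y = ezero \<and> conic_form w a b c (1,0) e y = ezero) = P (Tm y)"
      unfolding P_def by simp
  qed
  have e2: "card {y. P (Tm y)} = card {x. P x}"
    by (rule card_bij_pre[OF inj_bij[OF Tm_inj]])
  have e3: "card {x. P x} = (card (UNIV :: 'a ext set) - 1) * nroot (eadd (emul w z1 z1) (emul w (4,0) (emul w z2 z3)))"
    unfolding P_def
  proof (rule G)
    show "(z1,z2,z3) \<noteq> zero3" using zz u Sm_nz[of u] by simp
  qed (simp_all add: ezero_def)
  show ?thesis using e1 e2 e3 zz by simp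
qed

lemma line_conic_card: assumes u: "u \<noteq> zero3"
  shows "card (line2 w u \<inter> conic_pts w a b c (1,0) e) = nroot (Fa (4,0) (Sm u))"
proof -
  have "card (line2 w u \<inter> conic_pts w a b c (1,0) e) * (card (UNIV :: 'a ext set) - 1)
      = nroot (Fa (4,0) (Sm u)) * (card (UNIV :: 'a ext set) - 1)"
    using L1[of u] L2[OF u] by (simp add: mult.commute)
  then show ?thesis using Qm_pos by simp
qed

lemma tan_iff: assumes u: "u \<noteq> zero3"
  shows "card (line2 w u \<inter> conic_pts w a b c (1,0) e) = 1 \<longleftrightarrow> Fa (4,0) (Sm u) = ezero"
  using line_conic_card[OF u] nroot_1_iff by simp

lemma TP: assumes v: "v \<noteq> zero3"
  shows "card {L \<in> tangent_lines w a b c (1,0) e. proj_pt2 w v \<in> L} * (card (UNIV :: 'a ext set) - 1)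
    = card {u. u \<noteq> zero3 \<and> Fa (4,0) (Sm u) = ezero \<and> dot3 w u v = ezero}"
proof -
  let ?U = "{u. u \<noteq> zero3 \<and> Fa (4,0) (Sm u) = ezero \<and> dot3 w u v = ezero}"
  have eq: "{L \<in> tangent_lines w a b c (1,0) e. proj_pt2 w v \<in> L} = line2 w ` ?U"
  proof (intro equalityI subsetI)
    fix L assume "L \<in> {L \<in> tangent_lines w a b c (1,0) e. proj_pt2 w v \<in> L}"
    then have L: "L \<in> lines2 w" "card (L \<inter> conic_pts w a b c (1,0) e) = 1" "proj_pt2 w v \<in> L"
      unfolding tangent_lines_def by blast+
    then obtain u where u: "u \<noteq> zero3" "L = line2 w u" unfolding lines2_def by blast
    have "Fa (4,0) (Sm u) = ezero" using L(2) u tan_iff by simp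
    moreover have "dot3 w u v = ezero" using L(3) u line_mem[OF v] by simp
    ultimately show "L \<in> line2 w ` ?U" using u by blast
  next
    fix L assume "L \<in> line2 w ` ?U"
    then obtain u where u: "u \<noteq> zero3" "Fa (4,0) (Sm u) = ezero" "dot3 w u v = ezero" "L = line2 w u" by blast
    have "L \<in> lines2 w" using u unfolding lines2_def by blast
    moreover have "card (L \<inter> conic_pts w a b c (1,0) e) = 1" using u tan_iff by simp
    moreover have "proj_pt2 w v \<in> L" using u line_mem[OF v] by simp
    ultimately show "L \<in> {L \<in> tangent_lines w a b c (1,0) e. proj_pt2 w v \<in> L}"
      unfolding tangent_lines_def by blast
  qed
  have "card (line2 w ` ?U) * (card (UNIV :: 'a ext set) - 1) = card ?U"
  proof (rule fib_card)
    show "finite ?U" by simp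
    fix u assume u: "u \<in> ?U"
    have "{u' \<in> ?U. line2 w u' = line2 w u} = proj_pt2 w u"
    proof (intro equalityI subsetI)
      fix x assume "x \<in> {u' \<in> ?U. line2 w u' = line2 w u}"
      then show "x \<in> proj_pt2 w u" using line_eq_iff u by blast
    next
      fix x assume x: "x \<in> proj_pt2 w u"
      then obtain l where l: "l \<noteq> ezero" "x = smul3 w l u" by (blast elim: proj_E)
      have x0: "x \<noteq> zero3" using l u by simp
      have lx: "line2 w x = line2 w u" using l by (simp add: line2_smul)
      have "Fa (4,0) (Sm x) = ezero" using tan_iff[OF x0] tan_iff lx u by simp
      moreover have "dot3 w x v = ezero" using l u by (simp add: dot3_smul_left)
      ultimately show "x \<in> {u' \<in> ?U. line2 w u' = line2 w u}" using x0 lx by blast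
    qed
    then show "card {u' \<in> ?U. line2 w u' = line2 w u} = card (UNIV :: 'a ext set) - 1"
      using proj_card u by simp
  qed
  then show ?thesis using eq by simp
qed

lemma Ucount: assumes v: "v \<noteq> zero3"
  shows "card {u. u \<noteq> zero3 \<and> Fa (4,0) (Sm u) = ezero \<and> dot3 w u v = ezero}
    = (card (UNIV :: 'a ext set) - 1) * nroot (conic_form w a b c (1,0) e v)"
proof -
  obtain x1 x2 x3 where xx: "Tm v = (x1,x2,x3)" by (cases "Tm v" rule: prod_cases3)
  define P where "P = (\<lambda>z. z \<noteq> zero3 \<and> dot3 w (x1,x2,x3) z = ezero \<and> Fa (4,0) z = ezero)"
  have e1: "{u. u \<noteq> zero3 \<and> Fa (4,0) (Sm u) = ezero \<and> dot3 w u v = ezero} = {u. P (Sm u)}"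
  proof (rule Collect_cong)
    fix u
    have "dot3 w u v = ezero \<longleftrightarrow> dot3 w (x1,x2,x3) (Sm u) = ezero"
      using dot_iff[of u v] xx dot3_comm[of "Sm u" "(x1,x2,x3)"] by simp
    moreover have "u \<noteq> zero3 \<longleftrightarrow> Sm u \<noteq> zero3" using Sm_nz[of u] by simp
    ultimately show "(u \<noteq> zero3 \<and> Fa (4,0) (Sm u) = ezero \<and> dot3 w u v = ezero) = P (Sm u)"
      unfolding P_def by blast
  qed
  have e2: "card {u. P (Sm u)} = card {z. P z}"
    by (rule card_bij_pre[OF inj_bij[OF Sm_inj]])
  have e3: "card {z. P z} = (card (UNIV :: 'a ext set) - 1) * nroot (eadd (emul w x1 x1) (emul w (1,0) (emul w x2 x3)))"
    unfolding P_def
  proof (rule G)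
    show "(x1,x2,x3) \<noteq> zero3" using xx v Tm_nz[of v] by simp
    show "(4::'a,0::'a) \<noteq> ezero" by (rule four_nz)
  qed simp
  show ?thesis using e1 e2 e3 xx I1[of v] by simp
qed

lemma tcount: assumes v: "v \<noteq> zero3"
  shows "card {L \<in> tangent_lines w a b c (1,0) e. proj_pt2 w v \<in> L} = nroot (conic_form w a b c (1,0) e v)"
proof -
  have "card {L \<in> tangent_lines w a b c (1,0) e. proj_pt2 w v \<in> L} * (card (UNIV :: 'a ext set) - 1)
     = nroot (conic_form w a b c (1,0) e v) * (card (UNIV :: 'a ext set) - 1)"
    using TP[OF v] Ucount[OF v] by (simp add: mult.commute)
  then show ?thesis using Qm_pos by simp
qed

end

definition emb :: "'a::field \<times> 'a \<times> 'a \<Rightarrow> 'a ext \<times> 'a ext \<times> 'a ext" where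
  "emb r = (case r of (x,y,z) \<Rightarrow> ((x,0),(y,0),(z,0)))"

definition ksm :: "'a::field \<Rightarrow> 'a \<times> 'a \<times> 'a \<Rightarrow> 'a \<times> 'a \<times> 'a" where
  "ksm l r = (case r of (x,y,z) \<Rightarrow> (l*x, l*y, l*z))"

lemma emb_simp[simp]: "emb (x,y,z) = ((x,0),(y,0),(z,0))" by (simp add: emb_def)
lemma ksm_simp[simp]: "ksm l (x,y,z) = (l*x,l*y,l*z)" by (simp add: ksm_def)

lemma emb_ksm: "emb (ksm l r) = smul3 w (l,0) (emb r)"
  by (cases r rule: prod_cases3) (simp add: emul_def)

lemma emb_nz: "emb r = zero3 \<longleftrightarrow> r = (0,0,0)"
  by (cases r rule: prod_cases3) (simp add: zero3_def ezero_def)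

context conic begin

lemma emb_fiber:
  assumes r: "r \<noteq> (0,0,0)" and r': "r' \<noteq> (0,0,0)"
  shows "proj_pt2 w (emb r') = proj_pt2 w (emb r) \<longleftrightarrow> (\<exists>l. l \<noteq> 0 \<and> r' = ksm l r)"
proof
  assume "proj_pt2 w (emb r') = proj_pt2 w (emb r)"
  then have "emb r' \<in> proj_pt2 w (emb r)" using proj_self by metis
  then obtain l where l: "l \<noteq> ezero" "emb r' = smul3 w l (emb r)" by (blast elim: proj_E)
  obtain x y z where rr: "r = (x,y,z)" by (cases r rule: prod_cases3)
  obtain x' y' z' where rr': "r' = (x',y',z')" by (cases r' rule: prod_cases3)
  obtain l1 l2 where ll: "l = (l1,l2)" by (cases l)
  have e: "x' = l1*x" "y' = l1*y" "z' = l1*z" "l2*x = 0" "l2*y = 0" "l2*z = 0"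
    using l(2) rr rr' ll by (simp_all add: emul_def)
  have "l2 = 0" using e r rr by auto
  then have "l1 \<noteq> 0" using l(1) ll by (simp add: ezero_def)
  then show "\<exists>l. l \<noteq> 0 \<and> r' = ksm l r" using e rr rr' by auto
next
  assume "\<exists>l. l \<noteq> 0 \<and> r' = ksm l r"
  then obtain l where l: "l \<noteq> 0" "r' = ksm l r" by blast
  have "emb r' = smul3 w (l,0) (emb r)" using l by (simp add: emb_ksm[of l r w])
  moreover have "(l,(0::'a)) \<noteq> ezero" using l by (simp add: ezero_def)
  ultimately have "emb r' \<in> proj_pt2 w (emb r)" using proj_I by metis
  then show "proj_pt2 w (emb r') = proj_pt2 w (emb r)" by (rule proj_eq)
qed

lemma ksm_nz: "ksm l r = (0,0,0) \<longleftrightarrow> l = 0 \<or> r = (0,0,0)"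
  by (cases r rule: prod_cases3) auto

lemma ksm_inj: "r \<noteq> (0,0,0) \<Longrightarrow> inj_on (\<lambda>l. ksm l r) {l. l \<noteq> 0}"
  by (cases r rule: prod_cases3) (auto simp: inj_on_def)

lemma card_Knz: "card {l::'a. l \<noteq> 0} = card (UNIV :: 'a set) - 1"
proof -
  have "{l::'a. l \<noteq> 0} = UNIV - {0}" by auto
  then show ?thesis by (simp add: card_Diff_singleton)
qed

lemma Eq_count:
  "card {P \<in> PG2 w. in_PG2_q P \<and> card {L \<in> tangent_lines w a b c (1,0) e. P \<in> L} = 2} * (card (UNIV :: 'a set) - 1)
   = card {r. r \<noteq> (0,0,0) \<and> nroot (conic_form w a b c (1,0) e (emb r)) = 2}"
proof -
  let ?R = "{r. r \<noteq> (0,0,0) \<and> nroot (conic_form w a b c (1,0) e (emb r)) = 2}"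
  let ?f = "\<lambda>r. proj_pt2 w (emb r)"
  have eq: "{P \<in> PG2 w. in_PG2_q P \<and> card {L \<in> tangent_lines w a b c (1,0) e. P \<in> L} = 2} = ?f ` ?R"
  proof (intro equalityI subsetI)
    fix P assume "P \<in> {P \<in> PG2 w. in_PG2_q P \<and> card {L \<in> tangent_lines w a b c (1,0) e. P \<in> L} = 2}"
    then have P: "P \<in> PG2 w" "in_PG2_q P" "card {L \<in> tangent_lines w a b c (1,0) e. P \<in> L} = 2" by blast+
    obtain v where v: "v \<noteq> zero3" "P = proj_pt2 w v" using P(1) unfolding PG2_def by blast
    obtain x where x: "x \<in> P" "snd (fst x) = 0" "snd (fst (snd x)) = 0" "snd (snd (snd x)) = 0"
      using P(2) unfolding in_PG2_q_def by blast
    define r where "r = (fst (fst x), fst (fst (snd x)), fst (snd (snd x)))"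
    have xr: "x = emb r" using x unfolding r_def by (cases x rule: prod_cases3) (simp add: prod_eq_iff)
    have x0: "x \<noteq> zero3" using x(1) v proj_nz by blast
    then have r0: "r \<noteq> (0,0,0)" using xr emb_nz by metis
    have Px: "P = proj_pt2 w x" using x(1) v proj_eq by metis
    have "nroot (conic_form w a b c (1,0) e x) = 2" using P(3) Px tcount[OF x0] by simp
    then show "P \<in> ?f ` ?R" using r0 Px xr by blast
  next
    fix P assume "P \<in> ?f ` ?R"
    then obtain r where r: "r \<noteq> (0,0,0)" "nroot (conic_form w a b c (1,0) e (emb r)) = 2" "P = ?f r" by blast
    have r0: "emb r \<noteq> zero3" using r emb_nz by metis
    have "P \<in> PG2 w" using r PG2_I[OF r0] by simp
    moreover have "in_PG2_q P"
    proof -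
      have "emb r \<in> P" using r(3) proj_self by simp
      moreover have "snd (fst (emb r)) = 0 \<and> snd (fst (snd (emb r))) = 0 \<and> snd (snd (snd (emb r))) = 0"
        by (cases r rule: prod_cases3) simp
      ultimately show ?thesis unfolding in_PG2_q_def by blast
    qed
    moreover have "card {L \<in> tangent_lines w a b c (1,0) e. P \<in> L} = 2" using tcount[OF r0] r by simp
    ultimately show "P \<in> {P \<in> PG2 w. in_PG2_q P \<and> card {L \<in> tangent_lines w a b c (1,0) e. P \<in> L} = 2}"
      by blast
  qed
  have "card (?f ` ?R) * (card (UNIV :: 'a set) - 1) = card ?R"
  proof (rule fib_card)
    show "finite ?R" by simp
    fix r assume r: "r \<in> ?R"
    have fib: "{r' \<in> ?R. ?f r' = ?f r} = (\<lambda>l. ksm l r) ` {l. l \<noteq> 0}"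
    proof (intro equalityI subsetI)
      fix r' assume "r' \<in> {r' \<in> ?R. ?f r' = ?f r}"
      then show "r' \<in> (\<lambda>l. ksm l r) ` {l. l \<noteq> 0}" using emb_fiber r by blast
    next
      fix r' assume "r' \<in> (\<lambda>l. ksm l r) ` {l. l \<noteq> 0}"
      then obtain l where l: "l \<noteq> 0" "r' = ksm l r" by blast
      have rn: "r \<noteq> (0,0,0)" using r by simp
      have "ksm l r \<noteq> (0,0,0)" unfolding ksm_nz using l(1) rn by blast
      then have r'0: "r' \<noteq> (0,0,0)" using l(2) by simp
      have "conic_form w a b c (1,0) e (emb r') = emul w (emul w (l,0) (l,0)) (conic_form w a b c (1,0) e (emb r))"
        using l by (simp add: emb_ksm[of l r w] conic_smul)
      moreover have "(l,(0::'a)) \<noteq> ezero" using l by (simp add: ezero_def)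
      ultimately have "nroot (conic_form w a b c (1,0) e (emb r')) = 2" using nroot_scale r by simp
      moreover have "?f r' = ?f r" using emb_fiber r r'0 l by blast
      ultimately show "r' \<in> {r' \<in> ?R. ?f r' = ?f r}" using r'0 by blast
    qed
    show "card {r' \<in> ?R. ?f r' = ?f r} = card (UNIV :: 'a set) - 1"
    proof -
      have rn: "r \<noteq> (0,0,0)" using r by simp
      have "card ((\<lambda>l. ksm l r) ` {l. l \<noteq> 0}) = card {l::'a. l \<noteq> 0}"
        by (rule card_image[OF ksm_inj[OF rn]])
      then show ?thesis using fib card_Knz by simp
    qed
  qed
  then show ?thesis using eq by simp
qed

end

definition k4 :: "'a::field \<Rightarrow> 'a \<times> 'a \<times> 'a \<times> 'a \<Rightarrow> 'a \<times> 'a \<times> 'a \<times> 'a" where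
  "k4 l u = (case u of (t1,t2,x,z) \<Rightarrow> (l*t1, l*t2, l*x, l*z))"

definition cls3 :: "'a::field \<times> 'a \<times> 'a \<times> 'a \<Rightarrow> ('a \<times> 'a \<times> 'a \<times> 'a) set" where
  "cls3 u = (\<lambda>l. k4 l u) ` {l. l \<noteq> 0}"

lemma k4_simp[simp]: "k4 l (t1,t2,x,z) = (l*t1, l*t2, l*x, l*z)" by (simp add: k4_def)

lemma k4_mult: "k4 l (k4 m u) = k4 (l*m) u"
  by (cases u rule: prod_cases4) (simp add: mult.assoc)
lemma k4_one: "k4 1 u = u"
  by (cases u rule: prod_cases4) simp
lemma k4_zero_iff: "k4 l u = (0,0,0,0) \<longleftrightarrow> l = 0 \<or> u = (0,0,0,0)"
  by (cases u rule: prod_cases4) auto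
lemma k4_inj: "u \<noteq> (0,0,0,0) \<Longrightarrow> k4 l u = k4 m u \<Longrightarrow> l = m"
  by (cases u rule: prod_cases4) auto

lemma cls3_alt: "cls3 (t1,t2,x,z) = {(l*t1, l*t2, l*x, l*z) | l. l \<noteq> 0}"
  unfolding cls3_def by auto

lemma PG3_eq: "PG3 = cls3 ` {u. u \<noteq> (0,0,0,0)}"
proof -
  have "PG3 = {cls3 (t1,t2,x,z) | t1 t2 x z. (t1,t2,x,z) \<noteq> (0,0,0,0)}"
    unfolding PG3_def cls3_alt by simp
  also have "\<dots> = cls3 ` {u. u \<noteq> (0,0,0,0)}"
  proof (intro equalityI subsetI)
    fix P assume "P \<in> {cls3 (t1,t2,x,z) | t1 t2 x z. (t1,t2,x,z) \<noteq> (0,0,0,0)}"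
    then obtain t1 t2 x z where "P = cls3 (t1,t2,x,z)" "(t1,t2,x,z) \<noteq> (0,0,0,0)" by blast
    then show "P \<in> cls3 ` {u. u \<noteq> (0,0,0,0)}" by blast
  next
    fix P assume "P \<in> cls3 ` {u. u \<noteq> (0,0,0,0)}"
    then obtain u where u: "P = cls3 u" "u \<noteq> (0,0,0,0)" by blast
    obtain t1 t2 x z where "u = (t1,t2,x,z)" by (cases u rule: prod_cases4)
    then show "P \<in> {cls3 (t1,t2,x,z) | t1 t2 x z. (t1,t2,x,z) \<noteq> (0,0,0,0)}" using u by blast
  qed
  finally show ?thesis .
qed

lemma cls3_self: "u \<in> cls3 u"
  unfolding cls3_def using k4_one by (metis (mono_tags) image_eqI mem_Collect_eq one_neq_zero)

lemma cls3_E: "v \<in> cls3 u \<Longrightarrow> (\<And>l. l \<noteq> 0 \<Longrightarrow> v = k4 l u \<Longrightarrow> thesis) \<Longrightarrow> thesis"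
  unfolding cls3_def by blast

lemma cls3_I: "l \<noteq> 0 \<Longrightarrow> k4 l u \<in> cls3 u"
  unfolding cls3_def by blast

lemma cls3_eq: assumes "v \<in> cls3 u" shows "cls3 v = cls3 u"
proof -
  obtain l where l: "l \<noteq> 0" "v = k4 l u" using assms by (rule cls3_E)
  show ?thesis
  proof (intro equalityI subsetI)
    fix x assume "x \<in> cls3 v"
    then obtain m where "m \<noteq> 0" "x = k4 m v" by (rule cls3_E)
    then show "x \<in> cls3 u" using l cls3_I[of "m*l" u] by (simp add: k4_mult)
  next
    fix x assume "x \<in> cls3 u"
    then obtain m where m: "m \<noteq> 0" "x = k4 m u" by (rule cls3_E)
    have "x = k4 (m / l) v" using l m by (simp add: k4_mult)
    then show "x \<in> cls3 v" using cls3_I[of "m/l" v] l m by simp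
  qed
qed

lemma cls3_eq_iff: "cls3 v = cls3 u \<longleftrightarrow> v \<in> cls3 u"
  using cls3_eq cls3_self by metis

lemma cls3_card:
  fixes u :: "'a::{field,finite} \<times> 'a \<times> 'a \<times> 'a"
  assumes u: "u \<noteq> (0,0,0,0)" shows "card (cls3 u) = card (UNIV :: 'a set) - 1"
proof -
  have "inj_on (\<lambda>l. k4 l u) {l. l \<noteq> (0::'a)}" using k4_inj[OF u] by (auto simp: inj_on_def)
  then have "card (cls3 u) = card {l::'a. l \<noteq> 0}" unfolding cls3_def by (rule card_image)
  also have "{l::'a. l \<noteq> 0} = UNIV - {0}" by auto
  finally show ?thesis by (simp add: card_Diff_singleton)
qed

lemma cls3_count:
  fixes \<psi> :: "'a::{field,finite} \<times> 'a \<times> 'a \<times> 'a \<Rightarrow> bool"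
  assumes inv: "\<And>l u. l \<noteq> 0 \<Longrightarrow> \<psi> (k4 l u) = \<psi> u"
  shows "card {P \<in> PG3. \<forall>x\<in>P. \<psi> x} * (card (UNIV :: 'a set) - 1) = card {u. u \<noteq> (0,0,0,0) \<and> \<psi> u}"
proof -
  let ?V = "{u. u \<noteq> (0,0,0,0) \<and> \<psi> u}"
  have eq: "{P \<in> PG3. \<forall>x\<in>P. \<psi> x} = cls3 ` ?V"
  proof (intro equalityI subsetI)
    fix P assume "P \<in> {P \<in> PG3. \<forall>x\<in>P. \<psi> x}"
    then have P: "P \<in> PG3" "\<forall>x\<in>P. \<psi> x" by blast+
    then obtain u where u: "u \<noteq> (0,0,0,0)" "P = cls3 u" unfolding PG3_eq by blast
    then have "\<psi> u" using P cls3_self by blast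
    then show "P \<in> cls3 ` ?V" using u by blast
  next
    fix P assume "P \<in> cls3 ` ?V"
    then obtain u where u: "u \<noteq> (0,0,0,0)" "\<psi> u" "P = cls3 u" by blast
    have "P \<in> PG3" unfolding PG3_eq using u by blast
    moreover have "\<forall>x\<in>P. \<psi> x"
    proof
      fix x assume "x \<in> P"
      then obtain l where "l \<noteq> 0" "x = k4 l u" using u(3) by (blast elim: cls3_E)
      then show "\<psi> x" using inv u by simp
    qed
    ultimately show "P \<in> {P \<in> PG3. \<forall>x\<in>P. \<psi> x}" by blast
  qed
  have "card (cls3 ` ?V) * (card (UNIV :: 'a set) - 1) = card ?V"
  proof (rule fib_card)
    show "finite ?V" by simp
    fix u assume u: "u \<in> ?V"
    have "{v \<in> ?V. cls3 v = cls3 u} = cls3 u"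
    proof (intro equalityI subsetI)
      fix x assume "x \<in> {v \<in> ?V. cls3 v = cls3 u}"
      then show "x \<in> cls3 u" using cls3_eq_iff by blast
    next
      fix x assume x: "x \<in> cls3 u"
      then obtain l where l: "l \<noteq> 0" "x = k4 l u" by (rule cls3_E)
      have "x \<noteq> (0,0,0,0)" using l u k4_zero_iff[of l u] by simp
      moreover have "\<psi> x" using l inv u by simp
      moreover have "cls3 x = cls3 u" using x cls3_eq_iff by blast
      ultimately show "x \<in> {v \<in> ?V. cls3 v = cls3 u}" by blast
    qed
    moreover have "u \<noteq> (0,0,0,0)" using u by blast
    ultimately show "card {v \<in> ?V. cls3 v = cls3 u} = card (UNIV :: 'a set) - 1" using cls3_card by metis
  qed
  then show ?thesis using eq by simp
qed

lemma surf_hom: "surf_eq w a b c d e (l*t1) (l*t2) (l*X) (l*Z) = l^3 * surf_eq w a b c d e t1 t2 X Z"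
  unfolding surf_eq_def Let_def by algebra

lemma solveY:
  fixes b1 b2 R1 R2 w :: "'a::field"
  assumes N: "b1*b1 - w*(b2*b2) \<noteq> 0" and h: "R2*b1 = R1*b2"
  shows "(R1*b1 - w*(R2*b2)) / (b1*b1 - w*(b2*b2)) * b1 = R1"
    and "(R1*b1 - w*(R2*b2)) / (b1*b1 - w*(b2*b2)) * b2 = R2"
proof -
  have "(R1*b1 - w*(R2*b2)) * b1 = R1 * (b1*b1 - w*(b2*b2))"
  proof -
    have "(R1*b1 - w*(R2*b2)) * b1 = R1*b1*b1 - w*b2*(R2*b1)" by algebra
    also have "\<dots> = R1 * (b1*b1 - w*(b2*b2))" using h by algebra
    finally show ?thesis .
  qed
  then show "(R1*b1 - w*(R2*b2)) / (b1*b1 - w*(b2*b2)) * b1 = R1" using N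
    by (simp add: field_simps)
  have "(R1*b1 - w*(R2*b2)) * b2 = R2 * (b1*b1 - w*(b2*b2))"
  proof -
    have "(R1*b1 - w*(R2*b2)) * b2 = b1*(R1*b2) - w*R2*b2*b2" by algebra
    also have "\<dots> = R2 * (b1*b1 - w*(b2*b2))" using h by algebra
    finally show ?thesis .
  qed
  then show "(R1*b1 - w*(R2*b2)) / (b1*b1 - w*(b2*b2)) * b2 = R2" using N
    by (simp add: field_simps)
qed

context conic begin

definition "bt1 X Z = fst b * X + Z"
definition "bt2 X = snd b * X"
definition "kk1 X Z = fst a*X*X + fst c*X*Z + fst e*Z*Z"
definition "kk2 X Z = snd a*X*X + snd c*X*Z + snd e*Z*Z"

lemma Qemb: "conic_form w a b c (1,0) e ((X,0),(Y,0),(Z,0)) = (Y * bt1 X Z + kk1 X Z, Y * bt2 X + kk2 X Z)"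
  unfolding conic_form_def bt1_def bt2_def kk1_def kk2_def by (simp add: E_defs prod_eq_iff; algebra)

lemma surf_id: "surf_eq w a b c (1,0) e t1 t2 X Z
   = (2*t1*t2 - kk2 X Z) * bt1 X Z - (t1*t1 + w*(t2*t2) - kk1 X Z) * bt2 X"
  unfolding surf_eq_def Let_def bt1_def bt2_def kk1_def kk2_def by simp algebra

lemma tsq: "emul w t t = (fst t * fst t + w * (snd t * snd t), 2 * fst t * snd t)"
  unfolding emul_def by (simp add: prod_eq_iff; algebra)

lemma bt_nz: assumes b2: "snd b \<noteq> 0" and XZ: "(X,Z) \<noteq> (0,0)"
  shows "(bt1 X Z, bt2 X) \<noteq> ezero"
  using b2 XZ by (auto simp: bt1_def bt2_def ezero_def)

lemma Y_unique: assumes "(bt1 X Z, bt2 X) \<noteq> ezero"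
  and "Y * bt1 X Z = Y' * bt1 X Z" and "Y * bt2 X = Y' * bt2 X"
  shows "Y = Y'"
  using assms by (auto simp: ezero_def)

end

context conic begin

definition psi :: "'a \<times> 'a \<times> 'a \<times> 'a \<Rightarrow> bool" where
  "psi = (\<lambda>(t1, t2, X, Z). surf_eq w a b c (1,0) e t1 t2 X Z = 0)"

definition t0 :: "'a \<times> 'a \<times> 'a \<times> 'a \<Rightarrow> bool" where
  "t0 = (\<lambda>(t1, t2, X, Z). t1 = 0 \<and> t2 = 0)"

lemma psi_simp[simp]: "psi (t1,t2,X,Z) = (surf_eq w a b c (1,0) e t1 t2 X Z = 0)"
  by (simp add: psi_def)
lemma t0_simp[simp]: "t0 (t1,t2,X,Z) = (t1 = 0 \<and> t2 = 0)"
  by (simp add: t0_def)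

lemma surf_pts_eq: "surf_pts w a b c (1,0) e = {P \<in> PG3. \<forall>x\<in>P. psi x}"
  unfolding surf_pts_def psi_def by simp

lemma surf_pts0_eq: "surf_pts0 w a b c (1,0) e = {P \<in> PG3. \<forall>x\<in>P. psi x \<and> t0 x}"
  unfolding surf_pts0_def surf_pts_eq unfolding t0_def by blast

lemma psi_inv: "l \<noteq> 0 \<Longrightarrow> psi (k4 l u) = psi u"
  by (cases u rule: prod_cases4) (simp add: surf_hom)
lemma t0_inv: "l \<noteq> 0 \<Longrightarrow> t0 (k4 l u) = t0 u"
  by (cases u rule: prod_cases4) simp

lemma S_count: "card (surf_pts w a b c (1,0) e) * (card (UNIV :: 'a set) - 1) = card {u. u \<noteq> (0,0,0,0) \<and> psi u}"
  unfolding surf_pts_eq by (rule cls3_count) (rule psi_inv)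

lemma S0_count: "card (surf_pts0 w a b c (1,0) e) * (card (UNIV :: 'a set) - 1)
   = card {u. u \<noteq> (0,0,0,0) \<and> (psi u \<and> t0 u)}"
  unfolding surf_pts0_eq by (rule cls3_count) (simp add: psi_inv t0_inv)

definition "A1 = {u::'a \<times> 'a \<times> 'a \<times> 'a. \<not> t0 u \<and> fst (snd (snd u)) = 0 \<and> snd (snd (snd u)) = 0}"
definition "A2 = {u::'a \<times> 'a \<times> 'a \<times> 'a. \<not> t0 u \<and> (fst (snd (snd u)), snd (snd (snd u))) \<noteq> (0,0) \<and> psi u}"

lemma VS_split: "{u. u \<noteq> (0,0,0,0) \<and> psi u} = {u. u \<noteq> (0,0,0,0) \<and> (psi u \<and> t0 u)} \<union> (A1 \<union> A2)"
proof (intro equalityI subsetI)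
  fix u assume u: "u \<in> {u. u \<noteq> (0,0,0,0) \<and> psi u}"
  obtain t1 t2 X Z where uu: "u = (t1,t2,X,Z)" by (cases u rule: prod_cases4)
  show "u \<in> {u. u \<noteq> (0,0,0,0) \<and> (psi u \<and> t0 u)} \<union> (A1 \<union> A2)"
    using u uu unfolding A1_def A2_def by auto
next
  fix u assume u: "u \<in> {u. u \<noteq> (0,0,0,0) \<and> (psi u \<and> t0 u)} \<union> (A1 \<union> A2)"
  obtain t1 t2 X Z where uu: "u = (t1,t2,X,Z)" by (cases u rule: prod_cases4)
  have "surf_eq w a b c (1,0) e t1 t2 0 0 = 0" unfolding surf_id by (simp add: bt1_def bt2_def)
  then show "u \<in> {u. u \<noteq> (0,0,0,0) \<and> psi u}"
    using u uu unfolding A1_def A2_def by auto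
qed

lemma VS_disj: "{u. u \<noteq> (0,0,0,0) \<and> (psi u \<and> t0 u)} \<inter> (A1 \<union> A2) = {}" "A1 \<inter> A2 = {}"
  unfolding A1_def A2_def by auto

lemma A1_card: "card A1 = card (UNIV :: 'a set) * card (UNIV :: 'a set) - 1"
proof -
  have A1eq: "A1 = (\<lambda>p. (fst p, snd p, 0::'a, 0::'a)) ` (UNIV - {(0::'a,0::'a)})"
  proof (intro equalityI subsetI)
    fix u assume "u \<in> A1"
    moreover obtain t1 t2 X Z where uu: "u = (t1,t2,X,Z)" by (cases u rule: prod_cases4)
    ultimately have "u = (\<lambda>p. (fst p, snd p, 0::'a, 0::'a)) (t1,t2)" "(t1,t2) \<in> UNIV - {(0,0)}"
      unfolding A1_def by auto
    then show "u \<in> (\<lambda>p. (fst p, snd p, 0::'a, 0::'a)) ` (UNIV - {(0::'a,0::'a)})" by blast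
  next
    fix u assume "u \<in> (\<lambda>p. (fst p, snd p, 0::'a, 0::'a)) ` (UNIV - {(0::'a,0::'a)})"
    then obtain p where "p \<noteq> (0,0)" "u = (fst p, snd p, 0, 0)" by blast
    then show "u \<in> A1" unfolding A1_def by (cases p) auto
  qed
  have inj: "inj_on (\<lambda>p. (fst p, snd p, 0::'a, 0::'a)) (UNIV - {(0::'a,0::'a)})"
    by (auto simp: inj_on_def prod_eq_iff)
  have "card A1 = card (UNIV - {(0::'a,0::'a)})" unfolding A1eq by (rule card_image[OF inj])
  also have "\<dots> = card (UNIV :: ('a \<times> 'a) set) - 1" by (simp add: card_Diff_singleton)
  also have "card (UNIV :: ('a \<times> 'a) set) = card (UNIV :: 'a set) * card (UNIV :: 'a set)"
    using card_cartesian_product[of "UNIV :: 'a set" "UNIV :: 'a set"] by simp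
  finally show ?thesis .
qed

end

context conic begin

definition "R3 = {r::'a \<times> 'a \<times> 'a. (fst r, snd (snd r)) \<noteq> (0,0)}"
definition "Tt r = {t. t \<noteq> ezero \<and> emul w t t = conic_form w a b c (1,0) e (emb r)}"

lemma A2_B: assumes b2: "snd b \<noteq> 0" shows "card A2 = card (Sigma R3 Tt)"
proof (rule le_antisym)
  let ?h = "\<lambda>p::('a \<times> 'a \<times> 'a) \<times> 'a ext. (fst (snd p), snd (snd p), fst (fst p), snd (snd (fst p)))"
  show "card (Sigma R3 Tt) \<le> card A2"
  proof (rule card_inj_on_le)
    show "inj_on ?h (Sigma R3 Tt)"
    proof (rule inj_onI)
      fix p p' assume p: "p \<in> Sigma R3 Tt" and p': "p' \<in> Sigma R3 Tt" and hh: "?h p = ?h p'"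
      obtain X Y Z t where pp: "p = ((X,Y,Z),t)" by (metis prod_cases3 surj_pair)
      obtain X' Y' Z' t' where pp': "p' = ((X',Y',Z'),t')" by (metis prod_cases3 surj_pair)
      have eqs: "t' = t" "X' = X" "Z' = Z" using hh pp pp' by (simp_all add: prod_eq_iff)
      have XZ: "(X,Z) \<noteq> (0,0)" using p pp by (simp add: R3_def)
      have q1: "emul w t t = (Y * bt1 X Z + kk1 X Z, Y * bt2 X + kk2 X Z)" using p pp by (simp add: Tt_def Qemb)
      have q2: "emul w t t = (Y' * bt1 X Z + kk1 X Z, Y' * bt2 X + kk2 X Z)" using p' pp' eqs by (simp add: Tt_def Qemb)
      have "(Y * bt1 X Z + kk1 X Z, Y * bt2 X + kk2 X Z) = (Y' * bt1 X Z + kk1 X Z, Y' * bt2 X + kk2 X Z)"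
        by (rule trans[OF q1[symmetric] q2])
      then have "Y * bt1 X Z = Y' * bt1 X Z" "Y * bt2 X = Y' * bt2 X" by (simp_all only: prod.inject add_right_cancel)
      then have "Y = Y'" using Y_unique bt_nz[OF b2 XZ] by blast
      then show "p = p'" using pp pp' eqs by simp
    qed
    show "?h ` Sigma R3 Tt \<subseteq> A2"
    proof
      fix u assume "u \<in> ?h ` Sigma R3 Tt"
      then obtain p where p: "p \<in> Sigma R3 Tt" "u = ?h p" by blast
      obtain X Y Z t where pp: "p = ((X,Y,Z),t)" by (metis prod_cases3 surj_pair)
      obtain t1 t2 where tt: "t = (t1,t2)" by (cases t)
      have XZ: "(X,Z) \<noteq> (0,0)" using p pp by (simp add: R3_def)
      have tnz: "\<not> (t1 = 0 \<and> t2 = 0)" using p pp tt by (simp add: Tt_def ezero_def)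
      have q: "(t1 * t1 + w * (t2 * t2), 2 * t1 * t2) = (Y * bt1 X Z + kk1 X Z, Y * bt2 X + kk2 X Z)"
        using p pp tt tsq[of t] by (simp add: Tt_def Qemb)
      have "surf_eq w a b c (1,0) e t1 t2 X Z = 0"
        unfolding surf_id using q by (simp add: algebra_simps)
      then show "u \<in> A2" using p pp tt XZ tnz unfolding A2_def by simp
    qed
  qed simp
next
  define Yf where "Yf = (\<lambda>t1 t2 X Z. ((t1*t1 + w*(t2*t2) - kk1 X Z) * bt1 X Z - w * ((2*t1*t2 - kk2 X Z) * bt2 X))
     / (bt1 X Z * bt1 X Z - w * (bt2 X * bt2 X)))"
  let ?g = "\<lambda>u::'a \<times> 'a \<times> 'a \<times> 'a. ((fst (snd (snd u)), Yf (fst u) (fst (snd u)) (fst (snd (snd u))) (snd (snd (snd u))), snd (snd (snd u))), (fst u, fst (snd u)))"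
  show "card A2 \<le> card (Sigma R3 Tt)"
  proof (rule card_inj_on_le)
    show "inj_on ?g A2"
      by (rule inj_onI) (simp add: prod_eq_iff)
    show "?g ` A2 \<subseteq> Sigma R3 Tt"
    proof
      fix p assume "p \<in> ?g ` A2"
      then obtain u where u: "u \<in> A2" "p = ?g u" by blast
      obtain t1 t2 X Z where uu: "u = (t1,t2,X,Z)" by (cases u rule: prod_cases4)
      have XZ: "(X,Z) \<noteq> (0,0)" and tnz: "\<not> (t1 = 0 \<and> t2 = 0)"
        and ps: "surf_eq w a b c (1,0) e t1 t2 X Z = 0" using u uu unfolding A2_def by simp_all
      have N: "bt1 X Z * bt1 X Z - w * (bt2 X * bt2 X) \<noteq> 0"
        using norm_nz[OF bt_nz[OF b2 XZ]] by simp
      have h: "(2*t1*t2 - kk2 X Z) * bt1 X Z = (t1*t1 + w*(t2*t2) - kk1 X Z) * bt2 X"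
        using ps unfolding surf_id by simp
      note sY = solveY[OF N h]
      have e1: "Yf t1 t2 X Z * bt1 X Z + kk1 X Z = t1*t1 + w*(t2*t2)"
        using sY(1) unfolding Yf_def by simp
      have e2: "Yf t1 t2 X Z * bt2 X + kk2 X Z = 2*t1*t2"
        using sY(2) unfolding Yf_def by simp
      have "conic_form w a b c (1,0) e (emb (X, Yf t1 t2 X Z, Z)) = (t1*t1 + w*(t2*t2), 2*t1*t2)"
        unfolding emb_simp Qemb e1 e2 ..
      moreover have "emul w (t1,t2) (t1,t2) = (t1*t1 + w*(t2*t2), 2*t1*t2)"
        using tsq[of "(t1,t2)"] by simp
      ultimately have "emul w (t1,t2) (t1,t2) = conic_form w a b c (1,0) e (emb (X, Yf t1 t2 X Z, Z))"
        by simp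
      then have "(t1,t2) \<in> Tt (X, Yf t1 t2 X Z, Z)" using tnz by (simp add: Tt_def ezero_def)
      moreover have "(X, Yf t1 t2 X Z, Z) \<in> R3" using XZ by (simp add: R3_def)
      ultimately show "p \<in> Sigma R3 Tt" using u uu by simp
    qed
  qed simp
qed

lemma B_card: "card (Sigma R3 Tt) = 2 * card {r. r \<noteq> (0,0,0) \<and> nroot (conic_form w a b c (1,0) e (emb r)) = 2}"
proof -
  have "card (Sigma R3 Tt) = (\<Sum>r\<in>R3. card (Tt r))" by (rule card_SigmaI) simp_all
  also have "\<dots> = (\<Sum>r\<in>R3. if nroot (conic_form w a b c (1,0) e (emb r)) = 2 then 2 else 0)"
    unfolding Tt_def by (rule sum.cong) (simp_all add: nz_roots)
  also have "\<dots> = (\<Sum>r\<in>{r\<in>R3. nroot (conic_form w a b c (1,0) e (emb r)) = 2}. 2)"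
    by (rule sum.inter_filter[symmetric]) simp
  also have "{r\<in>R3. nroot (conic_form w a b c (1,0) e (emb r)) = 2}
      = {r. r \<noteq> (0,0,0) \<and> nroot (conic_form w a b c (1,0) e (emb r)) = 2}"
  proof (intro equalityI subsetI)
    fix r assume "r \<in> {r\<in>R3. nroot (conic_form w a b c (1,0) e (emb r)) = 2}"
    then show "r \<in> {r. r \<noteq> (0,0,0) \<and> nroot (conic_form w a b c (1,0) e (emb r)) = 2}"
      by (cases r rule: prod_cases3) (auto simp: R3_def)
  next
    fix r assume r: "r \<in> {r. r \<noteq> (0,0,0) \<and> nroot (conic_form w a b c (1,0) e (emb r)) = 2}"
    obtain X Y Z where rr: "r = (X,Y,Z)" by (cases r rule: prod_cases3)
    have "(X,Z) \<noteq> (0,0)"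
    proof
      assume "(X,Z) = (0,0)"
      then have "conic_form w a b c (1,0) e (emb r) = ezero" using rr
        by (simp add: Qemb bt1_def bt2_def kk1_def kk2_def ezero_def)
      then show False using r nroot_zero by simp
    qed
    then show "r \<in> {r\<in>R3. nroot (conic_form w a b c (1,0) e (emb r)) = 2}" using r rr by (simp add: R3_def)
  qed
  finally show ?thesis by simp
qed

end

theorem mainTheorem9:
  fixes w :: "'a::{finite, field}" and a b c d e :: "'a ext"
  assumes q_odd: "odd (card (UNIV :: 'a set))"
    and w_nonsq: "\<not> (\<exists>x. x * x = w)"
    and nonsing: "conic_nonsingular w a b c d e"
    and d1: "d = (1, 0)"
    and b_notin: "snd b \<noteq> 0"
    and sq: "eadd (eadd (eneg (emul w (emul w b c) d)) (emul w a (emul w d d)))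
               (emul w (emul w b b) e) \<noteq> ezero"
    and sq2: "\<exists>s. emul w s s = eadd (eadd (eneg (emul w (emul w b c) d)) (emul w a (emul w d d)))
               (emul w (emul w b b) e)"
  shows "2 * int (E_q w a b c d e) =
           int (card (surf_pts w a b c d e)) - int (card (surf_pts0 w a b c d e))
           - int (card (UNIV :: 'a set)) - 1"
proof -
  interpret qf w by unfold_locales (rule w_nonsq)
  obtain s where s: "emul w s s = eadd (eadd (eneg (emul w (emul w b c) (1,0))) (emul w a (emul w (1,0) (1,0))))
               (emul w (emul w b b) e)" using sq2 d1 by blast
  have snz: "s \<noteq> ezero"
  proof
    assume "s = ezero"
    then have "emul w s s = ezero" by simp
    then show False using s sq d1 by simp
  qed
  interpret conic w a b c e s by unfold_locales (rule s, rule snz)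
  define q where "q = card (UNIV :: 'a set)"
  define E where "E = E_q w a b c (1,0) e"
  define S where "S = card (surf_pts w a b c (1,0) e)"
  define S0 where "S0 = card (surf_pts0 w a b c (1,0) e)"
  define R where "R = card {r. r \<noteq> (0,0,0) \<and> nroot (conic_form w a b c (1,0) e (emb r)) = 2}"
  have q2: "q \<ge> 2"
  proof -
    have "card {0::'a, 1} \<le> q" unfolding q_def by (rule card_mono) simp_all
    then show ?thesis by simp
  qed
  have hE: "E * (q - 1) = R" unfolding E_def E_q_def q_def R_def by (rule Eq_count)
  have hS: "S * (q - 1) = card {u. u \<noteq> (0,0,0,0) \<and> psi u}" unfolding S_def q_def by (rule S_count)
  have hS0: "S0 * (q - 1) = card {u. u \<noteq> (0,0,0,0) \<and> (psi u \<and> t0 u)}" unfolding S0_def q_def by (rule S0_count)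
  have "card {u. u \<noteq> (0,0,0,0) \<and> psi u} = card {u. u \<noteq> (0,0,0,0) \<and> (psi u \<and> t0 u)} + (card A1 + card A2)"
    unfolding VS_split using VS_disj by (simp add: card_Un_disjoint)
  also have "card A1 = q * q - 1" unfolding q_def by (rule A1_card)
  also have "card A2 = 2 * R" unfolding R_def using A2_B[OF b_notin] B_card by simp
  finally have f: "S * (q - 1) = S0 * (q - 1) + (q * q - 1) + 2 * (E * (q - 1))" using hS hS0 hE by simp
  define m where "m = q - 1"
  have qm: "q = m + 1" "m \<ge> 1" using q2 unfolding m_def by simp_all
  have "q * q - 1 = (m + 2) * m" using qm by (simp add: algebra_simps)
  then have h: "S * m = (S0 + m + 2 + 2 * E) * m" using f qm by (simp add: algebra_simps)
  have "m \<noteq> 0" using qm by simp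
  then have "S = S0 + m + 2 + 2 * E" using h mult_right_cancel by blast
  then have "S = S0 + q + 1 + 2 * E" using qm by simp
  then show ?thesis unfolding d1 E_def S_def S0_def q_def by simp
qed

end
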